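(* Let $A_{\pi,\varrho}$ ($\pi,\varrho\in K$) denote the two-dimensional algebra with basis $r,r^2$ and multiplication $r\cdot r=r^2$, $r\cdot r^2=\pi r^2$, $r^2\cdot r=\varrho r^2$, $r^2\cdot r^2=\pi\varrho r^2$ (these algebras are bicommutative). (i) As subvarieties of $\mathfrak B$, $\mathrm{var}(A_{0,1})$ is defined by the identity $x_1(x_2x_3)=0$ and $\mathrm{var}(A_{1,0})$ is defined by the identity $(x_1x_2)x_3=0$ (i.e. each T-ideal of identities is generated, modulo the bicommutativity identities, by that single identity). Their cocharacters and codimensions coincide: $\chi_1=\chi_{(1)}$ and $\chi_n(A_{0,1})=\chi_n(A_{1,0})=\chi_{(n)}+\chi_{(n-1,1)}$ for $n\ge2$, and $c_n(A_{0,1})=c_n(A_{1,0})=n$ for all $n\ge1$. (ii) The algebra $A_{1,-1}$ generates the whole variety $\mathfrak B$; that is, $A_{1,-1}$ satisfies exactly the polynomial identities that follow from bicommutativity.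
   Context: $K$ is a field of characteristic $0$. $\mathfrak B$ is the variety of bicommutative algebras, defined by $(x_1x_2)x_3=(x_1x_3)x_2$ and $x_1(x_2x_3)=x_2(x_1x_3)$. For an algebra $A$, $\mathrm{var}(A)$ is the variety it generates; $P_n(A)$ is the space of multilinear elements of degree $n$ in $x_1,\dots,x_n$ of the relatively free algebra of $\mathrm{var}(A)$, $c_n(A)=\dim P_n(A)$, and $\chi_n(A)$ is the $S_n$-character of $P_n(A)$ under $\sigma f(x_1,\dots,x_n)=f(x_{\sigma(1)},\dots,x_{\sigma(n)})$; $\chi_\lambda$ is the irreducible $S_n$-character indexed by $\lambda$. *)

theory Defs
  imports Main "HOL.Vector_Spaces" "HOL-Library.Poly_Mapping" "HOL-Library.Product_Plus" "HOL-Library.FuncSet" "HOL-Combinatorics.Permutations"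
begin

datatype mon = V nat | M mon mon

type_synonym 'k npoly = "mon \<Rightarrow>\<^sub>0 'k"

definition pscale :: "'k::field \<Rightarrow> 'k npoly \<Rightarrow> 'k npoly" where
  "pscale c p = Poly_Mapping.map (\<lambda>x. c * x) p"

definition X :: "nat \<Rightarrow> 'k::field npoly" where
  "X i = Poly_Mapping.single (V i) 1"

definition pmul :: "'k::field npoly \<Rightarrow> 'k npoly \<Rightarrow> 'k npoly" where
  "pmul p q = (\<Sum>s\<in>Poly_Mapping.keys p. \<Sum>t\<in>Poly_Mapping.keys q. Poly_Mapping.single (M s t) (Poly_Mapping.lookup p s * Poly_Mapping.lookup q t))"

fun tsubst :: "(nat \<Rightarrow> 'k::field npoly) \<Rightarrow> mon \<Rightarrow> 'k npoly" where
  "tsubst \<sigma> (V i) = \<sigma> i"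
| "tsubst \<sigma> (M s t) = pmul (tsubst \<sigma> s) (tsubst \<sigma> t)"

definition psubst :: "(nat \<Rightarrow> 'k::field npoly) \<Rightarrow> 'k npoly \<Rightarrow> 'k npoly" where
  "psubst \<sigma> p = (\<Sum>t\<in>Poly_Mapping.keys p. pscale (Poly_Mapping.lookup p t) (tsubst \<sigma> t))"

inductive_set tideal :: "'k::field npoly set \<Rightarrow> 'k npoly set" for S where
  gen: "s \<in> S \<Longrightarrow> psubst \<sigma> s \<in> tideal S"
| zero: "0 \<in> tideal S"
| add: "f \<in> tideal S \<Longrightarrow> g \<in> tideal S \<Longrightarrow> f + g \<in> tideal S"
| scale: "f \<in> tideal S \<Longrightarrow> pscale c f \<in> tideal S"
| lmul: "f \<in> tideal S \<Longrightarrow> pmul g f \<in> tideal S"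
| rmul: "f \<in> tideal S \<Longrightarrow> pmul f g \<in> tideal S"

definition bicomm_ids :: "'k::field npoly set" where
  "bicomm_ids = { pmul (pmul (X 1) (X 2)) (X 3) - pmul (pmul (X 1) (X 3)) (X 2),
                  pmul (X 1) (pmul (X 2) (X 3)) - pmul (X 2) (pmul (X 1) (X 3)) }"

text \<open>An algebra is given by its additive group 'a, a scalar multiplication by K and a
  (bilinear) multiplication.\<close>
fun teval :: "('a \<Rightarrow> 'a \<Rightarrow> 'a) \<Rightarrow> (nat \<Rightarrow> 'a) \<Rightarrow> mon \<Rightarrow> 'a" where
  "teval mul a (V i) = a i"
| "teval mul a (M s t) = mul (teval mul a s) (teval mul a t)"

text \<open>Elements of A_{pi,rho} are coordinate pairs (a1,a2) meaning a1 r + a2 r^2.\<close>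
definition Asc :: "'k::field \<Rightarrow> 'k \<times> 'k \<Rightarrow> 'k \<times> 'k" where
  "Asc c v = (c * fst v, c * snd v)"

definition Amul :: "'k::field \<Rightarrow> 'k \<Rightarrow> 'k \<times> 'k \<Rightarrow> 'k \<times> 'k \<Rightarrow> 'k \<times> 'k" where
  "Amul \<pi> \<rho> u v = (0, fst u * fst v + \<pi> * fst u * snd v + \<rho> * snd u * fst v
                        + \<pi> * \<rho> * snd u * snd v)"

text \<open>Identities of A_{pi,rho} (pairs carry their componentwise additive structure).\<close>
definition IdA :: "'k::field \<Rightarrow> 'k \<Rightarrow> 'k npoly set" where
  "IdA \<pi> \<rho> = {p. \<forall>a. (\<Sum>t\<in>Poly_Mapping.keys p. Asc (Poly_Mapping.lookup p t) (teval (Amul \<pi> \<rho>) a t))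
                       = ((0::'k), (0::'k))}"

fun leaves :: "mon \<Rightarrow> nat list" where
  "leaves (V i) = [i]"
| "leaves (M s t) = leaves s @ leaves t"

definition Pn :: "nat \<Rightarrow> 'k::field npoly set" where
  "Pn n = {p. \<forall>t\<in>Poly_Mapping.keys p. mset (leaves t) = mset [1..<n+1]}"

definition pdim :: "'k::field npoly set \<Rightarrow> nat" where
  "pdim W = vector_space.dim pscale W"

definition ptrace :: "'k::field npoly set \<Rightarrow> ('k npoly \<Rightarrow> 'k npoly) \<Rightarrow> 'k" where
  "ptrace W T = (let B = (SOME B. B \<subseteq> W \<and> \<not> module.dependent pscale B \<and> module.span pscale B = W)
                 in (\<Sum>b\<in>B. module.representation pscale B (T b) b))"

text \<open>c_n(A) = dim P_n(A) = dim (P_n / (P_n \<inter> Id(A))).\<close>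
definition codim :: "'k::field npoly set \<Rightarrow> nat \<Rightarrow> nat" where
  "codim I n = pdim (Pn n :: 'k npoly set) - pdim (Pn n \<inter> I)"

definition pact :: "(nat \<Rightarrow> nat) \<Rightarrow> 'k::field npoly \<Rightarrow> 'k npoly" where
  "pact \<sigma> p = psubst (\<lambda>i. X (\<sigma> i)) p"

text \<open>chi_n(A)(sigma): the character of P_n(A) = P_n/(P_n \<inter> Id(A)), i.e. the trace of sigma
  on P_n minus its trace on the invariant subspace P_n \<inter> Id(A).\<close>
definition cochar :: "'k::field npoly set \<Rightarrow> nat \<Rightarrow> (nat \<Rightarrow> nat) \<Rightarrow> 'k" where
  "cochar I n \<sigma> = ptrace (Pn n) (pact \<sigma>) - ptrace (Pn n \<inter> I) (pact \<sigma>)"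

text \<open>Permutation character of S_n on tabloids of a composition mu of n (i.e. induced from the
  trivial character of the Young subgroup): the number of sigma-fixed tabloids.\<close>
definition young_char :: "nat list \<Rightarrow> nat \<Rightarrow> (nat \<Rightarrow> nat) \<Rightarrow> nat" where
  "young_char \<mu> n \<sigma> = card {f \<in> {1..n} \<rightarrow>\<^sub>E {0..<length \<mu>}.
       (\<forall>k\<in>{1..n}. f (\<sigma> k) = f k) \<and> (\<forall>i<length \<mu>. card {k\<in>{1..n}. f k = i} = \<mu> ! i)}"

text \<open>Irreducible character chi_lambda of S_n (lambda a partition of n, given as a
  non-increasing list of positive parts), via the Jacobi-Trudi / determinantal formula
  chi_lambda = det (xi^{(lambda_i - i + j)}).\<close>
definition irr_char :: "nat list \<Rightarrow> nat \<Rightarrow> (nat \<Rightarrow> nat) \<Rightarrow> 'k::field" where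
  "irr_char lam n \<sigma> = (\<Sum>w | w permutes {0..<length lam}.
      of_int (sign w) *
      (if \<forall>i<length lam. int i \<le> int (lam ! i) + int (w i)
       then of_nat (young_char (map (\<lambda>i. nat (int (lam ! i) + int (w i) - int i)) [0..<length lam]) n \<sigma>)
       else 0))"

end

theory Submission
  imports Defs "HOL-Computational_Algebra.Polynomial"
begin


lemma lookup_pscale[simp]: "Poly_Mapping.lookup (pscale c p) m = c * Poly_Mapping.lookup p m"
  by (simp add: pscale_def map.rep_eq when_def)

lemma pscale_eqI: "pscale c p = Poly_Mapping.map ((*) c) p" by (simp add: pscale_def)

interpretation pv: vector_space "pscale :: 'k::field \<Rightarrow> 'k npoly \<Rightarrow> 'k npoly"
  by unfold_locales (auto intro!: poly_mapping_eqI simp: lookup_add algebra_simps)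

lemma aux_delta2: assumes "finite A" "finite B" "\<And>s t. s \<notin> A \<or> t \<notin> B \<Longrightarrow> (f s t :: 'a::comm_monoid_add) = 0 \<or> s \<noteq> s0 \<or> t \<noteq> t0"
  shows "(\<Sum>s\<in>A. \<Sum>t\<in>B. if s = s0 \<and> t = t0 then f s t else 0) = f s0 t0"
proof -
  have "(\<Sum>s\<in>A. \<Sum>t\<in>B. if s = s0 \<and> t = t0 then f s t else 0) = (\<Sum>s\<in>A. if s = s0 then (if t0 \<in> B then f s t0 else 0) else 0)"
    by (rule sum.cong) (auto simp: assms(2) sum.delta' intro!: sum.neutral)
  also have "\<dots> = f s0 t0" using assms by (auto simp: sum.delta')
  finally show ?thesis .
qed

lemma lookup_pmul: "Poly_Mapping.lookup (pmul p q) m =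
   (case m of V i \<Rightarrow> 0 | M s t \<Rightarrow> Poly_Mapping.lookup p s * Poly_Mapping.lookup q t)"
proof (cases m)
  case (V i)
  then show ?thesis by (simp add: pmul_def lookup_sum lookup_single when_def)
next
  case (M s0 t0)
  have "Poly_Mapping.lookup (pmul p q) m = (\<Sum>s\<in>Poly_Mapping.keys p. \<Sum>t\<in>Poly_Mapping.keys q.
      (if s = s0 \<and> t = t0 then Poly_Mapping.lookup p s * Poly_Mapping.lookup q t else 0))"
    by (auto simp: pmul_def lookup_sum lookup_single when_def M intro!: sum.cong)
  also have "\<dots> = Poly_Mapping.lookup p s0 * Poly_Mapping.lookup q t0"
    by (rule aux_delta2) (auto simp: in_keys_iff)
  finally show ?thesis using M by simp
qed

lemma lookup_pmul_V[simp]: "Poly_Mapping.lookup (pmul p q) (V i) = 0"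
  by (simp add: lookup_pmul)
lemma lookup_pmul_M[simp]: "Poly_Mapping.lookup (pmul p q) (M s t) = Poly_Mapping.lookup p s * Poly_Mapping.lookup q t"
  by (simp add: lookup_pmul)

lemma pmul_add1: "pmul (p + q) r = pmul p r + pmul q r"
  by (rule poly_mapping_eqI) (auto simp: lookup_pmul lookup_add algebra_simps split: mon.split)
lemma pmul_add2: "pmul r (p + q) = pmul r p + pmul r q"
  by (rule poly_mapping_eqI) (auto simp: lookup_pmul lookup_add algebra_simps split: mon.split)
lemma pmul_scale1: "pmul (pscale c p) q = pscale c (pmul p q)"
  by (rule poly_mapping_eqI) (auto simp: lookup_pmul algebra_simps split: mon.split)
lemma pmul_scale2: "pmul p (pscale c q) = pscale c (pmul p q)"
  by (rule poly_mapping_eqI) (auto simp: lookup_pmul algebra_simps split: mon.split)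
lemma pmul_zero1[simp]: "pmul 0 q = 0"
  by (rule poly_mapping_eqI) (auto simp: lookup_pmul split: mon.split)
lemma pmul_zero2[simp]: "pmul q 0 = 0"
  by (rule poly_mapping_eqI) (auto simp: lookup_pmul split: mon.split)
lemma pmul_diff1: "pmul (p - q) r = pmul p r - pmul q r"
  by (rule poly_mapping_eqI) (auto simp: lookup_pmul lookup_minus algebra_simps split: mon.split)
lemma pmul_diff2: "pmul r (p - q) = pmul r p - pmul r q"
  by (rule poly_mapping_eqI) (auto simp: lookup_pmul lookup_minus algebra_simps split: mon.split)
lemma pmul_single: "pmul (Poly_Mapping.single s a) (Poly_Mapping.single t b) = Poly_Mapping.single (M s t) (a * b)"
  by (rule poly_mapping_eqI) (auto simp: lookup_pmul lookup_single when_def split: mon.split)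

lemma pmul_sum1: "pmul (\<Sum>i\<in>I. f i) q = (\<Sum>i\<in>I. pmul (f i) q)"
  by (induction I rule: infinite_finite_induct) (auto simp: pmul_add1)
lemma pmul_sum2: "pmul q (\<Sum>i\<in>I. f i) = (\<Sum>i\<in>I. pmul q (f i))"
  by (induction I rule: infinite_finite_induct) (auto simp: pmul_add2)

lemma pscale_sum: "pscale c (\<Sum>i\<in>I. f i) = (\<Sum>i\<in>I. pscale c (f i))"
  by (rule pv.scale_sum_right)

lemma poly_expand: assumes "finite S" "Poly_Mapping.keys p \<subseteq> S"
  shows "p = (\<Sum>t\<in>S. Poly_Mapping.single t (Poly_Mapping.lookup p t))"
proof (rule poly_mapping_eqI)
  fix m
  show "Poly_Mapping.lookup p m = Poly_Mapping.lookup (\<Sum>t\<in>S. Poly_Mapping.single t (Poly_Mapping.lookup p t)) m"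
    using assms by (auto simp: lookup_sum lookup_single when_def sum.delta' in_keys_iff)
qed

lemma single_as_pscale: "Poly_Mapping.single t c = pscale c (Poly_Mapping.single t 1)"
  by (rule poly_mapping_eqI) (simp add: lookup_single when_def)

lemma psubst_superset: assumes "finite S" "Poly_Mapping.keys p \<subseteq> S"
  shows "psubst \<sigma> p = (\<Sum>t\<in>S. pscale (Poly_Mapping.lookup p t) (tsubst \<sigma> t))"
  unfolding psubst_def
  by (rule sum.mono_neutral_left) (use assms in \<open>auto simp: in_keys_iff\<close>)

lemma psubst_add: "psubst \<sigma> (p + q) = psubst \<sigma> p + psubst \<sigma> q"
proof -
  let ?S = "Poly_Mapping.keys p \<union> Poly_Mapping.keys q"
  have k: "Poly_Mapping.keys (p+q) \<subseteq> ?S" by (simp add: keys_add)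
  show ?thesis
    by (subst (1 2 3) psubst_superset[where S="?S"]) 
       (auto simp: k lookup_add pv.scale_left_distrib sum.distrib)
qed

lemma psubst_scale: "psubst \<sigma> (pscale c p) = pscale c (psubst \<sigma> p)"
proof -
  have k: "Poly_Mapping.keys (pscale c p) \<subseteq> Poly_Mapping.keys p" by (auto simp: in_keys_iff)
  show ?thesis
    by (subst (1 2) psubst_superset[where S="Poly_Mapping.keys p"]) 
       (auto simp: k pscale_sum pv.scale_scale)
qed

lemma psubst_zero[simp]: "psubst \<sigma> 0 = 0" by (simp add: psubst_def)

lemma psubst_minus: "psubst \<sigma> (p - q) = psubst \<sigma> p - psubst \<sigma> q"
  by (metis add_diff_cancel psubst_add diff_add_cancel)

lemma psubst_single: "psubst \<sigma> (Poly_Mapping.single t c) = pscale c (tsubst \<sigma> t)"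
  by (subst psubst_superset[where S="{t}"]) auto

lemma psubst_sum: "psubst \<sigma> (\<Sum>i\<in>I. f i) = (\<Sum>i\<in>I. psubst \<sigma> (f i))"
  by (induction I rule: infinite_finite_induct) (auto simp: psubst_add)

lemma psubst_pmul: "psubst \<sigma> (pmul p q) = pmul (psubst \<sigma> p) (psubst \<sigma> q)"
proof -
  have "pmul p q = (\<Sum>s\<in>Poly_Mapping.keys p. \<Sum>t\<in>Poly_Mapping.keys q.
          pscale (Poly_Mapping.lookup p s * Poly_Mapping.lookup q t) (Poly_Mapping.single (M s t) 1))"
    unfolding pmul_def by (simp add: single_as_pscale[symmetric])
  then have "psubst \<sigma> (pmul p q) = (\<Sum>s\<in>Poly_Mapping.keys p. \<Sum>t\<in>Poly_Mapping.keys q.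
          pscale (Poly_Mapping.lookup p s * Poly_Mapping.lookup q t) (pmul (tsubst \<sigma> s) (tsubst \<sigma> t)))"
    by (simp add: psubst_sum psubst_scale psubst_single)
  also have "\<dots> = pmul (psubst \<sigma> p) (psubst \<sigma> q)"
    unfolding psubst_def pmul_sum1 pmul_sum2 pmul_scale1 pmul_scale2 pscale_sum pv.scale_scale
    by (subst sum.swap) (simp add: mult.commute)
  finally show ?thesis .
qed

lemma X_single: "X i = Poly_Mapping.single (V i) 1" by (simp add: X_def)

lemma psubst_X[simp]: "psubst \<sigma> (X i) = \<sigma> i"
  by (simp add: X_def psubst_single)


lemma Asc_simps[simp]: "fst (Asc c v) = c * fst v" "snd (Asc c v) = c * snd v"
  by (simp_all add: Asc_def)
lemma Amul_simps[simp]: "fst (Amul \<pi> \<rho> u v) = 0"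
  "snd (Amul \<pi> \<rho> u v) = (fst u + \<rho> * snd u) * (fst v + \<pi> * snd v)"
  by (simp_all add: Amul_def algebra_simps)

lemma Asc_add: "Asc c (u + v) = Asc c u + Asc c v" by (simp add: prod_eq_iff algebra_simps)
lemma Asc_add2: "Asc (c + d) u = Asc c u + Asc d u" by (simp add: prod_eq_iff algebra_simps)
lemma Asc_zero[simp]: "Asc 0 u = 0" "Asc c 0 = 0" by (simp_all add: prod_eq_iff)
lemma Asc_Asc: "Asc c (Asc d u) = Asc (c * d) u" by (simp add: prod_eq_iff algebra_simps)
lemma Asc_one[simp]: "Asc 1 u = u" by (simp add: prod_eq_iff)
lemma Asc_sum: "Asc c (\<Sum>i\<in>I. f i) = (\<Sum>i\<in>I. Asc c (f i))"
  by (induction I rule: infinite_finite_induct) (auto simp: Asc_add)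
lemma Asc_sum2: "Asc (\<Sum>i\<in>I. f i) u = (\<Sum>i\<in>I. Asc (f i) u)"
  by (induction I rule: infinite_finite_induct) (auto simp: Asc_add2)

lemma Amul_add1: "Amul \<pi> \<rho> (u + v) w = Amul \<pi> \<rho> u w + Amul \<pi> \<rho> v w" by (simp add: prod_eq_iff algebra_simps)
lemma Amul_add2: "Amul \<pi> \<rho> w (u + v) = Amul \<pi> \<rho> w u + Amul \<pi> \<rho> w v" by (simp add: prod_eq_iff algebra_simps)
lemma Amul_zero[simp]: "Amul \<pi> \<rho> 0 v = 0" "Amul \<pi> \<rho> v 0 = 0" by (simp_all add: prod_eq_iff)
lemma Amul_Asc1: "Amul \<pi> \<rho> (Asc c u) v = Asc c (Amul \<pi> \<rho> u v)" by (simp add: prod_eq_iff algebra_simps)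
lemma Amul_Asc2: "Amul \<pi> \<rho> u (Asc c v) = Asc c (Amul \<pi> \<rho> u v)" by (simp add: prod_eq_iff algebra_simps)
lemma Amul_sum1: "Amul \<pi> \<rho> (\<Sum>i\<in>I. f i) v = (\<Sum>i\<in>I. Amul \<pi> \<rho> (f i) v)"
  by (induction I rule: infinite_finite_induct) (auto simp: Amul_add1)
lemma Amul_sum2: "Amul \<pi> \<rho> v (\<Sum>i\<in>I. f i) = (\<Sum>i\<in>I. Amul \<pi> \<rho> v (f i))"
  by (induction I rule: infinite_finite_induct) (auto simp: Amul_add2)

definition ev :: "'k::field \<Rightarrow> 'k \<Rightarrow> (nat \<Rightarrow> 'k \<times> 'k) \<Rightarrow> 'k npoly \<Rightarrow> 'k \<times> 'k" where
  "ev \<pi> \<rho> a p = (\<Sum>t\<in>Poly_Mapping.keys p. Asc (Poly_Mapping.lookup p t) (teval (Amul \<pi> \<rho>) a t))"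

lemma IdA_ev: "IdA \<pi> \<rho> = {p. \<forall>a. ev \<pi> \<rho> a p = 0}"
  by (simp add: IdA_def ev_def zero_prod_def)

lemma ev_superset: assumes "finite S" "Poly_Mapping.keys p \<subseteq> S"
  shows "ev \<pi> \<rho> a p = (\<Sum>t\<in>S. Asc (Poly_Mapping.lookup p t) (teval (Amul \<pi> \<rho>) a t))"
  unfolding ev_def
  by (rule sum.mono_neutral_left) (use assms in \<open>auto simp: in_keys_iff\<close>)

lemma ev_add: "ev \<pi> \<rho> a (p + q) = ev \<pi> \<rho> a p + ev \<pi> \<rho> a q"
proof -
  let ?S = "Poly_Mapping.keys p \<union> Poly_Mapping.keys q"
  have k: "Poly_Mapping.keys (p+q) \<subseteq> ?S" by (simp add: keys_add)
  show ?thesis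
    by (subst (1 2 3) ev_superset[where S="?S"]) 
       (auto simp: k lookup_add Asc_add2 sum.distrib)
qed

lemma ev_scale: "ev \<pi> \<rho> a (pscale c p) = Asc c (ev \<pi> \<rho> a p)"
proof -
  have k: "Poly_Mapping.keys (pscale c p) \<subseteq> Poly_Mapping.keys p" by (auto simp: in_keys_iff)
  show ?thesis
    by (subst (1 2) ev_superset[where S="Poly_Mapping.keys p"]) 
       (auto simp: k Asc_sum Asc_Asc)
qed

lemma ev_zero[simp]: "ev \<pi> \<rho> a 0 = 0" by (simp add: ev_def)

lemma ev_minus: "ev \<pi> \<rho> a (p - q) = ev \<pi> \<rho> a p - ev \<pi> \<rho> a q"
  by (metis add_diff_cancel ev_add diff_add_cancel)

lemma ev_single: "ev \<pi> \<rho> a (Poly_Mapping.single t c) = Asc c (teval (Amul \<pi> \<rho>) a t)"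
  by (subst ev_superset[where S="{t}"]) auto

lemma ev_sum: "ev \<pi> \<rho> a (\<Sum>i\<in>I. f i) = (\<Sum>i\<in>I. ev \<pi> \<rho> a (f i))"
  by (induction I rule: infinite_finite_induct) (auto simp: ev_add)

lemma ev_pmul: "ev \<pi> \<rho> a (pmul p q) = Amul \<pi> \<rho> (ev \<pi> \<rho> a p) (ev \<pi> \<rho> a q)"
proof -
  have "pmul p q = (\<Sum>s\<in>Poly_Mapping.keys p. \<Sum>t\<in>Poly_Mapping.keys q.
          Poly_Mapping.single (M s t) (Poly_Mapping.lookup p s * Poly_Mapping.lookup q t))"
    unfolding pmul_def by simp
  then have "ev \<pi> \<rho> a (pmul p q) = (\<Sum>s\<in>Poly_Mapping.keys p. \<Sum>t\<in>Poly_Mapping.keys q.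
          Asc (Poly_Mapping.lookup p s * Poly_Mapping.lookup q t) (Amul \<pi> \<rho> (teval (Amul \<pi> \<rho>) a s) (teval (Amul \<pi> \<rho>) a t)))"
    by (simp add: ev_sum ev_single)
  also have "\<dots> = Amul \<pi> \<rho> (ev \<pi> \<rho> a p) (ev \<pi> \<rho> a q)"
    unfolding ev_def Amul_sum1 Amul_sum2 Amul_Asc1 Amul_Asc2 Asc_Asc Asc_sum
    by (subst sum.swap) (simp add: mult.commute)
  finally show ?thesis .
qed

lemma ev_tsubst: "ev \<pi> \<rho> a (tsubst \<sigma> t) = teval (Amul \<pi> \<rho>) (\<lambda>i. ev \<pi> \<rho> a (\<sigma> i)) t"
  by (induction t) (auto simp: ev_pmul)

lemma ev_psubst: "ev \<pi> \<rho> a (psubst \<sigma> p) = ev \<pi> \<rho> (\<lambda>i. ev \<pi> \<rho> a (\<sigma> i)) p"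
  unfolding psubst_def ev_sum ev_scale ev_tsubst by (simp add: ev_def)

lemma ev_X[simp]: "ev \<pi> \<rho> a (X i) = a i"
  by (simp add: X_def ev_single)

lemma IdA_psubst: "p \<in> IdA \<pi> \<rho> \<Longrightarrow> psubst \<sigma> p \<in> IdA \<pi> \<rho>"
  by (simp add: IdA_ev ev_psubst)

lemma IdA_add: "p \<in> IdA \<pi> \<rho> \<Longrightarrow> q \<in> IdA \<pi> \<rho> \<Longrightarrow> p + q \<in> IdA \<pi> \<rho>"
  by (simp add: IdA_ev ev_add)
lemma IdA_minus: "p \<in> IdA \<pi> \<rho> \<Longrightarrow> q \<in> IdA \<pi> \<rho> \<Longrightarrow> p - q \<in> IdA \<pi> \<rho>"
  by (simp add: IdA_ev ev_minus)
lemma IdA_scale: "p \<in> IdA \<pi> \<rho> \<Longrightarrow> pscale c p \<in> IdA \<pi> \<rho>"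
  by (simp add: IdA_ev ev_scale)
lemma IdA_zero: "0 \<in> IdA \<pi> \<rho>"
  by (simp add: IdA_ev)

lemma IdA_subspace: "pv.subspace (IdA \<pi> \<rho>)"
  by (simp add: pv.subspace_def IdA_add IdA_scale IdA_zero)

lemma tideal_sub_IdA: assumes "S \<subseteq> IdA \<pi> \<rho>" shows "tideal S \<subseteq> IdA \<pi> \<rho>"
proof
  fix f assume "f \<in> tideal S"
  then show "f \<in> IdA \<pi> \<rho>"
    by induction (use assms in \<open>auto simp: IdA_ev ev_psubst ev_add ev_scale ev_pmul\<close>)
qed

lemma bicomm_IdA: "bicomm_ids \<subseteq> IdA \<pi> \<rho>"
  by (auto simp: bicomm_ids_def IdA_ev ev_pmul ev_minus prod_eq_iff algebra_simps)


inductive beq :: "mon \<Rightarrow> mon \<Rightarrow> bool" where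
  brefl: "beq m m"
| bsym: "beq a b \<Longrightarrow> beq b a"
| btrans: "beq a b \<Longrightarrow> beq b c \<Longrightarrow> beq a c"
| bcl: "beq a b \<Longrightarrow> beq (M a c) (M b c)"
| bcr: "beq a b \<Longrightarrow> beq (M c a) (M c b)"
| brc: "beq (M (M a b) c) (M (M a c) b)"
| blc: "beq (M a (M b c)) (M b (M a c))"

abbreviation e1 :: "mon \<Rightarrow> 'k::field npoly" where "e1 m \<equiv> Poly_Mapping.single m 1"

lemma tideal_minus: "f \<in> tideal S \<Longrightarrow> g \<in> tideal S \<Longrightarrow> f - g \<in> tideal S"
proof -
  assume a: "f \<in> tideal S" "g \<in> tideal S"
  have "pscale (-1) g = - g" by (rule poly_mapping_eqI) simp
  then have "f - g = f + pscale (-1) g" by simp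
  then show ?thesis using tideal.add[OF a(1) tideal.scale[OF a(2), of "-1"]] by simp
qed

lemma tideal_neg: "f \<in> tideal S \<Longrightarrow> - f \<in> tideal S"
  using tideal_minus[OF tideal.zero] by fastforce

lemma tsubst_e1: "(\<And>i. \<sigma> i = e1 (\<tau> i)) \<Longrightarrow> \<exists>m'. tsubst \<sigma> t = e1 m'"
  by (induction t) (auto simp: pmul_single)

lemma beq_tideal: assumes "bicomm_ids \<subseteq> S" "beq m m'"
  shows "(e1 m - e1 m' :: 'k::field npoly) \<in> tideal S"
  using assms(2)
proof induction
  case (brefl m) then show ?case by (simp add: tideal.zero)
next
  case (bsym a b)
  have "(e1 b - e1 a :: 'k npoly) = - (e1 a - e1 b)" by simp
  then show ?case using tideal_neg[OF bsym(2)] by simp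
next
  case (btrans a b c)
  have "(e1 a - e1 b) + (e1 b - e1 c) \<in> tideal S" by (rule tideal.add[OF btrans(3) btrans(4)])
  then show ?case by simp
next
  case (bcl a b c)
  have "pmul (e1 a - e1 b) (e1 c) = (e1 (M a c) - e1 (M b c) :: 'k npoly)"
    by (simp add: pmul_diff1 pmul_single)
  then show ?case using tideal.rmul[OF bcl(2), of "e1 c"] by simp
next
  case (bcr a b c)
  have "pmul (e1 c) (e1 a - e1 b) = (e1 (M c a) - e1 (M c b) :: 'k npoly)"
    by (simp add: pmul_diff2 pmul_single)
  then show ?case using tideal.lmul[OF bcr(2), of "e1 c"] by simp
next
  case (brc a b c)
  define \<sigma> where "\<sigma> = (\<lambda>i::nat. if i = 1 then e1 a else if i = 2 then e1 b else (e1 c :: 'k npoly))"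
  have s: "\<sigma> 1 = e1 a" "\<sigma> 2 = e1 b" "\<sigma> 3 = e1 c" by (simp_all add: \<sigma>_def)
  have g: "pmul (pmul (X 1) (X 2)) (X 3) - pmul (pmul (X 1) (X 3)) (X 2) \<in> S"
    using assms(1) by (auto simp: bicomm_ids_def)
  have "psubst \<sigma> (pmul (pmul (X 1) (X 2)) (X 3) - pmul (pmul (X 1) (X 3)) (X 2)) = e1 (M (M a b) c) - e1 (M (M a c) b)"
    unfolding psubst_minus psubst_pmul psubst_X s by (simp add: pmul_single)
  then show ?case using tideal.gen[OF g, of \<sigma>] by simp
next
  case (blc a b c)
  define \<sigma> where "\<sigma> = (\<lambda>i::nat. if i = 1 then e1 a else if i = 2 then e1 b else (e1 c :: 'k npoly))"
  have s: "\<sigma> 1 = e1 a" "\<sigma> 2 = e1 b" "\<sigma> 3 = e1 c" by (simp_all add: \<sigma>_def)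
  have g: "pmul (X 1) (pmul (X 2) (X 3)) - pmul (X 2) (pmul (X 1) (X 3)) \<in> S"
    using assms(1) by (auto simp: bicomm_ids_def)
  have "psubst \<sigma> (pmul (X 1) (pmul (X 2) (X 3)) - pmul (X 2) (pmul (X 1) (X 3))) = e1 (M a (M b c)) - e1 (M b (M a c))"
    unfolding psubst_minus psubst_pmul psubst_X s by (simp add: pmul_single)
  then show ?case using tideal.gen[OF g, of \<sigma>] by simp
qed

lemma beq_com: "beq (M (M x y) (M z w)) (M (M z w) (M x y))"
proof -
  have 1: "beq (M (M x y) (M z w)) (M (M z y) (M x w))" for x y z w
  proof -
    have "beq (M (M x y) (M z w)) (M (M x (M z w)) y)" by (rule brc)
    moreover have "beq (M (M x (M z w)) y) (M (M z (M x w)) y)" by (intro bcl blc)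
    moreover have "beq (M (M z (M x w)) y) (M (M z y) (M x w))" by (rule brc)
    ultimately show ?thesis by (meson btrans)
  qed
  have 2: "beq (M (M x y) (M z w)) (M (M x w) (M z y))" for x y z w
  proof -
    have "beq (M (M x y) (M z w)) (M z (M (M x y) w))" by (rule blc)
    moreover have "beq (M z (M (M x y) w)) (M z (M (M x w) y))" by (intro bcr brc)
    moreover have "beq (M z (M (M x w) y)) (M (M x w) (M z y))" by (rule blc)
    ultimately show ?thesis by (meson btrans)
  qed
  show ?thesis using 1 2 btrans by blast
qed

lemma beq_assoc: "beq (M (M a (M u v)) d) (M a (M (M u v) d))"
proof -
  have "beq (M (M a (M u v)) d) (M (M a d) (M u v))" by (rule brc)
  moreover have "beq (M (M a d) (M u v)) (M (M u v) (M a d))" by (rule beq_com)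
  moreover have "beq (M (M u v) (M a d)) (M a (M (M u v) d))" by (rule blc)
  ultimately show ?thesis by (meson btrans)
qed

fun lb :: "nat \<Rightarrow> nat list \<Rightarrow> mon" where
  "lb l [] = V l"
| "lb l (r # rs) = M (lb l rs) (V r)"

fun cn :: "nat list \<Rightarrow> nat list \<Rightarrow> mon" where
  "cn [] rs = V 0"
| "cn [l] rs = lb l rs"
| "cn (l # l' # ls) rs = M (V l) (cn (l' # ls) rs)"

lemma cn_Cons: "ls \<noteq> [] \<Longrightarrow> cn (l # ls) rs = M (V l) (cn ls rs)"
  by (cases ls) auto

lemma cn_compound: "ls \<noteq> [] \<Longrightarrow> rs \<noteq> [] \<Longrightarrow> \<exists>u v. cn ls rs = M u v"
proof (induction ls rs rule: cn.induct)
  case (2 l rs) then show ?case by (cases rs) auto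
qed auto

lemma beq_append_r: assumes "ls \<noteq> []" "rs \<noteq> []"
  shows "beq (M (cn ls rs) (V j)) (cn ls (j # rs))"
  using assms
proof (induction ls rs rule: cn.induct)
  case (2 l rs) then show ?case by (simp add: brefl)
next
  case (3 l l' ls rs)
  obtain u v where uv: "cn (l' # ls) rs = M u v" using cn_compound 3 by blast
  have "beq (M (M (V l) (cn (l' # ls) rs)) (V j)) (M (V l) (M (cn (l' # ls) rs) (V j)))"
    using beq_assoc[of "V l" u v "V j"] uv by simp
  moreover have "beq (M (V l) (M (cn (l' # ls) rs) (V j))) (M (V l) (cn (l' # ls) (j # rs)))"
    using 3 by (intro bcr) simp
  ultimately show ?case by (auto intro: btrans)
qed auto

lemma beq_lb_prod: assumes "ls2 \<noteq> []" "rs2 \<noteq> []"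
  shows "beq (M (lb l rs1) (cn ls2 rs2)) (cn (l # ls2) (rs1 @ rs2))"
proof (induction rs1)
  case Nil then show ?case using assms by (simp add: cn_Cons brefl)
next
  case (Cons r rs)
  have "beq (M (lb l (r # rs)) (cn ls2 rs2)) (M (M (lb l rs) (cn ls2 rs2)) (V r))"
    by (simp add: brc)
  moreover have "beq (M (M (lb l rs) (cn ls2 rs2)) (V r)) (M (cn (l # ls2) (rs @ rs2)) (V r))"
    using Cons by (rule bcl)
  moreover have "beq (M (cn (l # ls2) (rs @ rs2)) (V r)) (cn (l # ls2) (r # rs @ rs2))"
    using assms by (intro beq_append_r) auto
  ultimately show ?case by (auto intro: btrans)
qed

lemma beq_prod: assumes "ls1 \<noteq> []" "rs1 \<noteq> []" "ls2 \<noteq> []" "rs2 \<noteq> []"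
  shows "beq (M (cn ls1 rs1) (cn ls2 rs2)) (cn (ls1 @ ls2) (rs1 @ rs2))"
  using assms
proof (induction ls1 rs1 rule: cn.induct)
  case (2 l rs) then show ?case using beq_lb_prod by simp
next
  case (3 l l' ls rs)
  obtain u v where uv: "cn (l' # ls) rs = M u v" using cn_compound 3 by blast
  have "beq (M (M (V l) (cn (l' # ls) rs)) (cn ls2 rs2)) (M (V l) (M (cn (l' # ls) rs) (cn ls2 rs2)))"
    using beq_assoc[of "V l" u v] uv by simp
  moreover have "beq (M (V l) (M (cn (l' # ls) rs) (cn ls2 rs2))) (M (V l) (cn ((l' # ls) @ ls2) (rs @ rs2)))"
    using 3 by (intro bcr) simp
  ultimately show ?case by (auto intro: btrans)
qed auto

fun Lm :: "mon \<Rightarrow> nat multiset" where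
  "Lm (V i) = {#}"
| "Lm (M s t) = (case s of V i \<Rightarrow> {#i#} | M _ _ \<Rightarrow> Lm s) + Lm t"

fun Rm :: "mon \<Rightarrow> nat multiset" where
  "Rm (V i) = {#}"
| "Rm (M s t) = Rm s + (case t of V j \<Rightarrow> {#j#} | M _ _ \<Rightarrow> Rm t)"

lemma normal_form: "\<exists>s t. m = M s t \<Longrightarrow> \<exists>ls rs. ls \<noteq> [] \<and> rs \<noteq> [] \<and> mset ls = Lm m \<and> mset rs = Rm m
   \<and> beq m (cn ls rs)"
proof (induction m)
  case (V x) then show ?case by simp
next
  case (M s t)
  show ?case
  proof (cases s)
    case (V i)
    show ?thesis
    proof (cases t)
      case (V j) then show ?thesis using \<open>s = V i\<close> by (intro exI[of _ "[i]"] exI[of _ "[j]"]) (auto intro: brefl)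
    next
      case (M u v)
      then obtain ls rs where *: "ls \<noteq> []" "rs \<noteq> []" "mset ls = Lm t" "mset rs = Rm t" "beq t (cn ls rs)"
        using M.IH(2) by blast
      show ?thesis
        using * \<open>s = V i\<close> M by (intro exI[of _ "i # ls"] exI[of _ rs]) (auto simp: cn_Cons intro: bcr)
    qed
  next
    case (M s1 s2)
    then obtain ls rs where *: "ls \<noteq> []" "rs \<noteq> []" "mset ls = Lm s" "mset rs = Rm s" "beq s (cn ls rs)"
      using M.IH(1) by blast
    show ?thesis
    proof (cases t)
      case (V j)
      have "beq (M s t) (cn ls (j # rs))"
        using bcl[OF *(5)] beq_append_r[OF *(1,2)] V by (auto intro: btrans)
      then show ?thesis using * \<open>s = M s1 s2\<close> V
        by (intro exI[of _ ls] exI[of _ "j # rs"]) auto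
    next
      case (M u v)
      then obtain ls2 rs2 where **: "ls2 \<noteq> []" "rs2 \<noteq> []" "mset ls2 = Lm t" "mset rs2 = Rm t" "beq t (cn ls2 rs2)"
        using M.IH(2) by blast
      have "beq (M s t) (cn (ls @ ls2) (rs @ rs2))"
        using btrans[OF bcl[OF *(5)] bcr[OF **(5)]] beq_prod[OF *(1,2) **(1,2)] by (auto intro: btrans)
      then show ?thesis using * ** \<open>s = M s1 s2\<close> M
        by (intro exI[of _ "ls @ ls2"] exI[of _ "rs @ rs2"]) auto
    qed
  qed
qed

fun foldM :: "mon \<Rightarrow> nat list \<Rightarrow> mon" where
  "foldM x [] = x"
| "foldM x (r # rs) = M (foldM x rs) (V r)"

lemma foldM_cong: "beq x y \<Longrightarrow> beq (foldM x rs) (foldM y rs)"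
  by (induction rs) (auto intro: bcl)

lemma lb_mul: "beq (M (lb b rs) q) (foldM (M (V b) q) rs)"
proof (induction rs)
  case Nil then show ?case by (simp add: brefl)
next
  case (Cons r rs)
  have "beq (M (lb b (r # rs)) q) (M (M (lb b rs) q) (V r))" by (simp add: brc)
  then show ?case using bcl[OF Cons] by (auto intro: btrans)
qed

lemma beq_swap_lb: assumes "rs \<noteq> []" shows "beq (M (V a) (lb b rs)) (M (V b) (lb a rs))"
proof -
  obtain r rs' where rs: "rs = r # rs'" using assms by (cases rs) auto
  have 1: "beq (M (V a) (lb b rs)) (foldM (M (V b) (M (V a) (V r))) rs')"
    using blc[of "V a" "lb b rs'" "V r"] lb_mul[of b rs' "M (V a) (V r)"] rs by (auto intro: btrans)
  have 2: "beq (M (V b) (lb a rs)) (foldM (M (V a) (M (V b) (V r))) rs')"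
    using blc[of "V b" "lb a rs'" "V r"] lb_mul[of a rs' "M (V b) (V r)"] rs by (auto intro: btrans)
  have 3: "beq (foldM (M (V b) (M (V a) (V r))) rs') (foldM (M (V a) (M (V b) (V r))) rs')"
    by (intro foldM_cong blc)
  show ?thesis using 1 2 3 by (meson bsym btrans)
qed

lemma beq_swap_cn: assumes "rs \<noteq> []" shows "beq (cn (a # b # ys) rs) (cn (b # a # ys) rs)"
proof (cases ys)
  case Nil then show ?thesis using beq_swap_lb[OF assms] by simp
next
  case (Cons y ys') then show ?thesis by (simp add: blc)
qed

lemma beq_insort_cn: assumes "rs \<noteq> []" shows "beq (cn (x # ys) rs) (cn (insort x ys) rs)"
proof (induction ys)
  case Nil then show ?case by (simp add: brefl)
next
  case (Cons y ys)
  show ?case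
  proof (cases "x \<le> y")
    case True then show ?thesis by (simp add: brefl)
  next
    case False
    have "beq (cn (y # x # ys) rs) (cn (y # insort x ys) rs)"
      using bcr[OF Cons] by (simp add: cn_Cons insort_not_Nil)
    then show ?thesis using False beq_swap_cn[OF assms, of x y ys] by (auto intro: btrans)
  qed
qed

lemma beq_sort_cn: assumes "rs \<noteq> []" shows "beq (cn ls rs) (cn (sort ls) rs)"
proof (induction ls)
  case Nil then show ?case by (simp add: brefl)
next
  case (Cons x ls)
  have 1: "beq (cn (x # ls) rs) (cn (x # sort ls) rs)"
  proof (cases ls)
    case Nil then show ?thesis by (simp add: brefl)
  next
    case (Cons y ys)
    then have "sort ls \<noteq> []" by simp
    then show ?thesis using bcr[OF Cons.IH] \<open>ls = y # ys\<close> by (simp add: cn_Cons)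
  qed
  show ?case using btrans[OF 1 beq_insort_cn[OF assms]] by simp
qed

lemma beq_insort_lb: "beq (lb l (x # ys)) (lb l (insort x ys))"
proof (induction ys)
  case Nil then show ?case by (simp add: brefl)
next
  case (Cons y ys)
  show ?case
  proof (cases "x \<le> y")
    case True then show ?thesis by (simp add: brefl)
  next
    case False
    have "beq (lb l (y # x # ys)) (lb l (y # insort x ys))"
      using bcl[OF Cons] by simp
    moreover have "beq (lb l (x # y # ys)) (lb l (y # x # ys))" by (simp add: brc)
    ultimately show ?thesis using False by (auto intro: btrans)
  qed
qed

lemma beq_sort_lb: "beq (lb l rs) (lb l (sort rs))"
proof (induction rs)
  case Nil then show ?case by (simp add: brefl)
next
  case (Cons x rs)
  have "beq (lb l (x # rs)) (lb l (x # sort rs))" using bcl[OF Cons] by simp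
  then show ?case using beq_insort_lb by (auto intro: btrans)
qed

lemma beq_sort_cn_r: "ls \<noteq> [] \<Longrightarrow> beq (cn ls rs) (cn ls (sort rs))"
proof (induction ls rs rule: cn.induct)
  case (2 l rs) then show ?case using beq_sort_lb by simp
next
  case (3 l l' ls rs) then show ?case by (simp add: bcr)
qed auto

definition Cf :: "nat multiset \<Rightarrow> nat multiset \<Rightarrow> mon" where
  "Cf L R = cn (sorted_list_of_multiset L) (sorted_list_of_multiset R)"

lemma beq_cn_Cf: assumes "ls \<noteq> []" "rs \<noteq> []" shows "beq (cn ls rs) (Cf (mset ls) (mset rs))"
proof -
  have "beq (cn ls rs) (cn (sort ls) rs)" by (rule beq_sort_cn[OF assms(2)])
  moreover have "beq (cn (sort ls) rs) (cn (sort ls) (sort rs))" using assms by (intro beq_sort_cn_r) (metis length_0_conv length_sort)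
  ultimately show ?thesis by (auto simp: Cf_def intro: btrans)
qed

lemma beq_Cf: assumes "m = M s t" shows "beq m (Cf (Lm m) (Rm m))"
  and "Lm m \<noteq> {#}" "Rm m \<noteq> {#}"
proof -
  obtain ls rs where *: "ls \<noteq> []" "rs \<noteq> []" "mset ls = Lm m" "mset rs = Rm m" "beq m (cn ls rs)"
    using normal_form assms by blast
  show "beq m (Cf (Lm m) (Rm m))" using * beq_cn_Cf[OF *(1,2)] by (auto intro: btrans)
  show "Lm m \<noteq> {#}" "Rm m \<noteq> {#}" using * by auto
qed


lemma digits_bound: "(\<forall>k<N. d k < B) \<Longrightarrow> (\<Sum>k<N. d k * B ^ k) < (B::nat) ^ N"
proof (induction N)
  case 0 then show ?case by simp
next
  case (Suc N)
  have "(\<Sum>k<Suc N. d k * B ^ k) = (\<Sum>k<N. d k * B ^ k) + d N * B ^ N" by simp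
  also have "\<dots> < B ^ N + d N * B ^ N" using Suc by simp
  also have "\<dots> = (d N + 1) * B ^ N" by simp
  also have "\<dots> \<le> B * B ^ N" using Suc.prems by (intro mult_right_mono) auto
  finally show ?case by simp
qed

lemma digits_inj: "(\<forall>k<N. d k < B) \<Longrightarrow> (\<forall>k<N. d' k < B) \<Longrightarrow>
   (\<Sum>k<N. d k * B ^ k) = (\<Sum>k<N. d' k * (B::nat) ^ k) \<Longrightarrow> \<forall>k<N. d k = d' k"
proof (induction N)
  case 0 then show ?case by simp
next
  case (Suc N)
  let ?S = "\<Sum>k<N. d k * B ^ k" and ?S' = "\<Sum>k<N. d' k * B ^ k"
  have p1: "\<forall>k<N. d k < B" "\<forall>k<N. d' k < B" using Suc.prems(1,2) by auto
  have b: "?S < B ^ N" "?S' < B ^ N" using p1 by (auto intro!: digits_bound)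
  have eq: "?S + d N * B ^ N = ?S' + d' N * B ^ N" using Suc.prems(3) by simp
  have Bpos: "B ^ N \<noteq> 0" using b(1) by linarith
  have "(?S + d N * B ^ N) div B ^ N = d N + ?S div B ^ N" using Bpos by (rule div_mult_self1)
  also have "?S div B ^ N = 0" using b(1) by (rule div_less)
  finally have 1: "(?S + d N * B ^ N) div B ^ N = d N" by simp
  have "(?S' + d' N * B ^ N) div B ^ N = d' N + ?S' div B ^ N" using Bpos by (rule div_mult_self1)
  also have "?S' div B ^ N = 0" using b(2) by (rule div_less)
  finally have 2: "(?S' + d' N * B ^ N) div B ^ N = d' N" by simp
  have dN: "d N = d' N" using eq 1 2 by simp
  then have "?S = ?S'" using eq by simp
  then have "\<forall>k<N. d k = d' k" using p1 Suc.IH by blast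
  then show ?case using dN by (auto simp: less_Suc_eq)
qed

lemma prod_mset_pow: "prod_mset (image_mset (\<lambda>i. t ^ f i) L) = (t::'a::comm_monoid_mult) ^ sum_mset (image_mset f L)"
  by (induction L) (auto simp: power_add)

lemma sum_mset_count: "set_mset (L::nat multiset) \<subseteq> {..<N} \<Longrightarrow> sum_mset (image_mset f L) = (\<Sum>i<N. count L i * (f i :: nat))"
proof (induction L)
  case empty then show ?case by simp
next
  case (add x L)
  then have "x < N" by auto
  have "(\<Sum>i<N. count (add_mset x L) i * f i) = (\<Sum>i<N. count L i * f i + (if i = x then f x else 0))"
    by (rule sum.cong) auto
  also have "\<dots> = (\<Sum>i<N. count L i * f i) + f x" using \<open>x < N\<close> by (simp add: sum.distrib sum.delta)
  finally show ?case using add by simp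
qed

lemma sum_even_odd: "(\<Sum>k<2*(N::nat). g k) = (\<Sum>i<N. g (2*i) + g (2*i+1) :: nat)"
  by (induction N) (auto simp: numeral_2_eq_2)

lemma kron_indep:
  fixes c :: "nat multiset \<times> nat multiset \<Rightarrow> 'k::field_char_0"
  assumes D: "finite D"
    and Z: "\<And>y z :: nat \<Rightarrow> 'k. (\<Sum>x\<in>D. c x * prod_mset (image_mset y (fst x)) * prod_mset (image_mset z (snd x))) = 0"
  shows "\<forall>x\<in>D. c x = 0"
proof -
  have "finite (\<Union>x\<in>D. set_mset (fst x) \<union> set_mset (snd x))" using D by auto
  then obtain N where N: "\<And>x. x \<in> D \<Longrightarrow> set_mset (fst x) \<subseteq> {..<N} \<and> set_mset (snd x) \<subseteq> {..<N}"
    by (metis (no_types, lifting) UN_subset_iff finite_nat_iff_bounded le_sup_iff)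
  define B where "B = Suc (\<Sum>x\<in>D. size (fst x) + size (snd x))"
  have cB: "count (fst x) i < B \<and> count (snd x) i < B" if "x \<in> D" for x i
  proof -
    have "count (fst x) i \<le> size (fst x)" "count (snd x) i \<le> size (snd x)" by (auto simp: count_le_size)
    moreover have "size (fst x) + size (snd x) \<le> (\<Sum>x\<in>D. size (fst x) + size (snd x))"
      using D that by (intro member_le_sum) auto
    ultimately show ?thesis unfolding B_def by linarith
  qed
  define dg :: "nat multiset \<times> nat multiset \<Rightarrow> nat \<Rightarrow> nat" where "dg x k = (if even k then count (fst x) (k div 2) else count (snd x) (k div 2))" for x k
  define E where "E x = (\<Sum>k<2*N. dg x k * B ^ k)" for x
  have E_alt: "E x = sum_mset (image_mset (\<lambda>i. B ^ (2*i)) (fst x)) + sum_mset (image_mset (\<lambda>i. B ^ (2*i+1)) (snd x))"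
    if "x \<in> D" for x
  proof -
    have "E x = (\<Sum>i<N. count (fst x) i * B ^ (2*i) + count (snd x) i * B ^ (2*i+1))"
      unfolding E_def sum_even_odd by (simp add: dg_def)
    also have "\<dots> = sum_mset (image_mset (\<lambda>i. B ^ (2*i)) (fst x)) + sum_mset (image_mset (\<lambda>i. B ^ (2*i+1)) (snd x))"
      using sum_mset_count[of "fst x" N "\<lambda>i. B^(2*i)"] sum_mset_count[of "snd x" N "\<lambda>i. B^(2*i+1)"] N[OF that]
      by (simp only: sum.distrib)
    finally show ?thesis .
  qed
  have Einj: "inj_on E D"
  proof (rule inj_onI)
    fix x x' assume x: "x \<in> D" "x' \<in> D" "E x = E x'"
    have "\<forall>k<2*N. dg x k = dg x' k"
      by (rule digits_inj[where B=B]) (use x cB in \<open>auto simp: dg_def E_def\<close>)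
    then have "count (fst x) i = count (fst x') i \<and> count (snd x) i = count (snd x') i" for i
    proof -
      assume h: "\<forall>k<2*N. dg x k = dg x' k"
      show ?thesis
      proof (cases "i < N")
        case True
        then have "dg x (2*i) = dg x' (2*i)" "dg x (2*i+1) = dg x' (2*i+1)" using h by auto
        then show ?thesis by (simp add: dg_def)
      next
        case False
        then have "i \<notin> set_mset (fst x)" "i \<notin> set_mset (snd x)" "i \<notin> set_mset (fst x')" "i \<notin> set_mset (snd x')"
          using N[OF x(1)] N[OF x(2)] by auto
        then show ?thesis by (metis count_eq_zero_iff)
      qed
    qed
    then show "x = x'" by (simp add: prod_eq_iff multiset_eqI)
  qed
  define P where "P = (\<Sum>x\<in>D. monom (c x) (E x))"
  have "poly P t = 0" for t
  proof -
    have "poly P t = (\<Sum>x\<in>D. c x * t ^ E x)" by (simp add: P_def poly_sum poly_monom)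
    also have "\<dots> = (\<Sum>x\<in>D. c x * prod_mset (image_mset (\<lambda>i. t ^ (B ^ (2*i))) (fst x))
                     * prod_mset (image_mset (\<lambda>i. t ^ (B ^ (2*i+1))) (snd x)))"
      by (rule sum.cong) (auto simp: prod_mset_pow E_alt power_add)
    also have "\<dots> = 0" by (rule Z)
    finally show ?thesis .
  qed
  then have P0: "P = 0" using poly_all_0_iff_0 by blast
  show ?thesis
  proof
    fix x0 assume x0: "x0 \<in> D"
    have "coeff P (E x0) = (\<Sum>x\<in>D. if E x = E x0 then c x else 0)" by (simp add: P_def coeff_sum)
    also have "\<dots> = (\<Sum>x\<in>D. if x = x0 then c x else 0)"
      by (rule sum.cong) (use Einj x0 in \<open>auto dest: inj_onD\<close>)
    also have "\<dots> = c x0" using x0 D by simp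
    finally show "c x0 = 0" using P0 by simp
  qed
qed


definition phi :: "'k::field \<Rightarrow> 'k \<times> 'k \<Rightarrow> 'k" where "phi \<rho> u = fst u + \<rho> * snd u"
definition psi :: "'k::field \<Rightarrow> 'k \<times> 'k \<Rightarrow> 'k" where "psi \<pi> v = fst v + \<pi> * snd v"

lemma fst_teval_M[simp]: "fst (teval (Amul \<pi> \<rho>) a (M s t)) = 0" by simp

lemma teval_lb: "rs \<noteq> [] \<Longrightarrow> teval (Amul \<pi> \<rho>) a (lb l rs) =
   (0, \<rho> ^ (length rs - 1) * phi \<rho> (a l) * prod_list (map (\<lambda>r. psi \<pi> (a r)) rs))"
proof (induction rs)
  case Nil then show ?case by simp
next
  case (Cons r rs)
  show ?case
  proof (cases "rs = []")
    case True then show ?thesis by (simp add: prod_eq_iff phi_def psi_def)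
  next
    case False
    then obtain k where k: "length rs = Suc k" by (cases rs) auto
    show ?thesis using Cons.IH[OF False] k by (simp add: prod_eq_iff phi_def psi_def algebra_simps)
  qed
qed

lemma teval_cn: "ls \<noteq> [] \<Longrightarrow> rs \<noteq> [] \<Longrightarrow> teval (Amul \<pi> \<rho>) a (cn ls rs) =
   (0, \<pi> ^ (length ls - 1) * \<rho> ^ (length rs - 1) * prod_list (map (\<lambda>l. phi \<rho> (a l)) ls)
        * prod_list (map (\<lambda>r. psi \<pi> (a r)) rs))"
proof (induction ls rs rule: cn.induct)
  case (2 l rs) then show ?case by (simp add: teval_lb)
next
  case (3 l l' ls rs)
  then show ?case by (simp add: prod_eq_iff phi_def psi_def algebra_simps)
qed auto

lemma teval_Cf: "L \<noteq> {#} \<Longrightarrow> R \<noteq> {#} \<Longrightarrow> teval (Amul \<pi> \<rho>) a (Cf L R) =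
   (0, \<pi> ^ (size L - 1) * \<rho> ^ (size R - 1) * prod_mset (image_mset (\<lambda>l. phi \<rho> (a l)) L)
        * prod_mset (image_mset (\<lambda>r. psi \<pi> (a r)) R))"
proof -
  assume LR: "L \<noteq> {#}" "R \<noteq> {#}"
  let ?ls = "sorted_list_of_multiset L" and ?rs = "sorted_list_of_multiset R"
  have ne: "?ls \<noteq> []" "?rs \<noteq> []" using LR by (metis mset_sorted_list_of_multiset mset_zero_iff)+
  have len: "length ?ls = size L" "length ?rs = size R" by (metis mset_sorted_list_of_multiset size_mset)+
  have pr: "prod_list (map f ?ls) = prod_mset (image_mset f L)" "prod_list (map g ?rs) = prod_mset (image_mset g R)" for f g :: "nat \<Rightarrow> 'a"
    by (metis mset_sorted_list_of_multiset mset_map prod_mset_prod_list)+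
  show ?thesis unfolding Cf_def teval_cn[OF ne] len pr ..
qed

lemma tideal_sum: "(\<And>i. i \<in> I \<Longrightarrow> f i \<in> tideal S) \<Longrightarrow> sum f I \<in> tideal S"
  by (induction I rule: infinite_finite_induct) (auto intro: tideal.zero tideal.add)

lemma lookup_V_zero:
  assumes "p \<in> IdA \<pi> \<rho>" shows "Poly_Mapping.lookup p (V i) = 0"
proof -
  define a :: "nat \<Rightarrow> 'a \<times> 'a" where "a = (\<lambda>j. if j = i then (1, 0) else (0, 0))"
  have ft: "fst (teval (Amul \<pi> \<rho>) a t) = (if t = V i then 1 else 0)" for t
    by (cases t) (auto simp: a_def)
  have "0 = fst (ev \<pi> \<rho> a p)" using assms by (simp add: IdA_ev)
  also have "\<dots> = (\<Sum>t\<in>Poly_Mapping.keys p. if t = V i then Poly_Mapping.lookup p t else 0)"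
    unfolding ev_def fst_sum by (rule sum.cong) (auto simp: ft)
  also have "\<dots> = Poly_Mapping.lookup p (V i)" by (simp add: sum.delta in_keys_iff)
  finally show ?thesis by simp
qed

lemma IdA_sub_tideal:
  fixes \<pi> \<rho> :: "'k::field_char_0"
  assumes bic: "bicomm_ids \<subseteq> S" and SI: "S \<subseteq> IdA \<pi> \<rho>" and pr: "\<pi> \<noteq> \<rho>"
    and kap: "\<And>L R. L \<noteq> {#} \<Longrightarrow> R \<noteq> {#} \<Longrightarrow> \<pi> ^ (size L - 1) * \<rho> ^ (size R - 1) = 0 \<Longrightarrow> e1 (Cf L R) \<in> tideal S"
  shows "IdA \<pi> \<rho> \<subseteq> tideal S"
proof
  fix p :: "'k npoly" assume p: "p \<in> IdA \<pi> \<rho>"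
  define K where "K = Poly_Mapping.keys p"
  have fK: "finite K" by (simp add: K_def)
  have Kc: "\<exists>s t. m = M s t" if "m \<in> K" for m
  proof (cases m)
    case (V i) then show ?thesis using lookup_V_zero[OF p, of i] that by (simp add: K_def in_keys_iff)
  qed auto
  define C where "C t = Cf (Lm t) (Rm t)" for t
  have pexp: "p = (\<Sum>t\<in>K. pscale (Poly_Mapping.lookup p t) (e1 t))"
    using poly_expand[OF fK, of p] by (simp add: K_def single_as_pscale[symmetric])
  define q where "q = (\<Sum>t\<in>K. pscale (Poly_Mapping.lookup p t) (e1 (C t)))"
  have pq: "p - q = (\<Sum>t\<in>K. pscale (Poly_Mapping.lookup p t) (e1 t - e1 (C t)))"
    unfolding q_def by (subst pexp) (simp add: sum_subtractf pv.scale_right_diff_distrib)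
  have pqT: "p - q \<in> tideal S"
    unfolding pq
  proof (rule tideal_sum, rule tideal.scale)
    fix t assume "t \<in> K"
    then obtain s u where "t = M s u" using Kc by blast
    then show "e1 t - e1 (C t) \<in> tideal S" unfolding C_def by (intro beq_tideal[OF bic] beq_Cf)
  qed
  have TI: "tideal S \<subseteq> IdA \<pi> \<rho>" by (rule tideal_sub_IdA[OF SI])
  have qI: "q \<in> IdA \<pi> \<rho>"
  proof -
    have "q = p - (p - q)" by simp
    then show ?thesis using IdA_minus[OF p, of "p - q"] pqT TI by auto
  qed
  define D where "D = (\<lambda>t. (Lm t, Rm t)) ` K"
  have fD: "finite D" using fK by (simp add: D_def)
  have Dne: "fst x \<noteq> {#} \<and> snd x \<noteq> {#}" if xD: "x \<in> D" for x
  proof -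
    obtain t where t: "t \<in> K" "x = (Lm t, Rm t)" using xD unfolding D_def by blast
    obtain s u where "t = M s u" using Kc[OF t(1)] by blast
    then show ?thesis using beq_Cf(2,3)[of t s u] t(2) by simp
  qed
  define d where "d x = (\<Sum>t\<in>{t. t \<in> K \<and> (Lm t, Rm t) = x}. Poly_Mapping.lookup p t)" for x
  have qD: "q = (\<Sum>x\<in>D. pscale (d x) (e1 (Cf (fst x) (snd x))))"
  proof -
    have "q = (\<Sum>x\<in>D. \<Sum>t\<in>{t. t \<in> K \<and> (Lm t, Rm t) = x}. pscale (Poly_Mapping.lookup p t) (e1 (C t)))"
      unfolding q_def by (rule sum.group[symmetric]) (auto simp: fK fD D_def)
    also have "\<dots> = (\<Sum>x\<in>D. \<Sum>t\<in>{t. t \<in> K \<and> (Lm t, Rm t) = x}. pscale (Poly_Mapping.lookup p t) (e1 (Cf (fst x) (snd x))))"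
      by (intro sum.cong refl) (auto simp: C_def)
    also have "\<dots> = (\<Sum>x\<in>D. pscale (d x) (e1 (Cf (fst x) (snd x))))"
      by (simp add: d_def pv.scale_sum_left)
    finally show ?thesis .
  qed
  define kp where "kp x = \<pi> ^ (size (fst x) - 1) * \<rho> ^ (size (snd x) - 1)" for x :: "nat multiset \<times> nat multiset"
  have indep: "\<forall>x\<in>D. d x * kp x = 0"
  proof (rule kron_indep[OF fD])
    fix y z :: "nat \<Rightarrow> 'k"
    define u2 where "u2 j = (z j - y j) / (\<pi> - \<rho>)" for j
    define a where "a j = (y j - \<rho> * u2 j, u2 j)" for j
    have ph: "phi \<rho> (a j) = y j" "psi \<pi> (a j) = z j" for j
    proof -
      show "phi \<rho> (a j) = y j" by (simp add: phi_def a_def)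
      have e: "\<pi> * u2 j - \<rho> * u2 j = z j - y j" 
      proof -
        have "\<pi> - \<rho> \<noteq> 0" using pr by simp
        then have "(\<pi> - \<rho>) * u2 j = z j - y j" by (simp add: u2_def)
        then show ?thesis by (simp add: left_diff_distrib)
      qed
      have "psi \<pi> (a j) = y j + (\<pi> * u2 j - \<rho> * u2 j)" by (simp add: psi_def a_def algebra_simps)
      then show "psi \<pi> (a j) = z j" unfolding e by simp
    qed
    have "0 = snd (ev \<pi> \<rho> a q)" using qI by (simp add: IdA_ev)
    also have "\<dots> = (\<Sum>x\<in>D. d x * snd (teval (Amul \<pi> \<rho>) a (Cf (fst x) (snd x))))"
      unfolding qD ev_sum ev_scale ev_single snd_sum by simp
    also have "\<dots> = (\<Sum>x\<in>D. d x * kp x * prod_mset (image_mset y (fst x)) * prod_mset (image_mset z (snd x)))"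
      by (intro sum.cong refl) (use Dne in \<open>auto simp: teval_Cf ph kp_def\<close>)
    finally show "(\<Sum>x\<in>D. d x * kp x * prod_mset (image_mset y (fst x)) * prod_mset (image_mset z (snd x))) = 0" by simp
  qed
  have qT: "q \<in> tideal S"
    unfolding qD
  proof (rule tideal_sum)
    fix x assume x: "x \<in> D"
    show "pscale (d x) (e1 (Cf (fst x) (snd x))) \<in> tideal S"
    proof (cases "d x = 0")
      case True
      have "pscale 0 (e1 (Cf (fst x) (snd x))) = (0 :: 'k npoly)" by (rule poly_mapping_eqI) simp
      then show ?thesis using True tideal.zero by simp
    next
      case False
      then have "kp x = 0" using indep x by auto
      then show ?thesis using kap Dne[OF x] by (intro tideal.scale) (auto simp: kp_def)
    qed
  qed
  have "p = (p - q) + q" by simp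
  then show "p \<in> tideal S" using tideal.add[OF pqT qT] by simp
qed


lemma e1_M: "(e1 (M a b) :: 'k::field npoly) = pmul (e1 a) (e1 b)" by (simp add: pmul_single)

lemma gen3: assumes "g \<in> S"
  shows "psubst (\<lambda>i::nat. if i = 1 then e1 a else if i = 2 then e1 b else (e1 c :: 'k::field npoly)) g \<in> tideal S"
  using assms by (rule tideal.gen)

lemma Cf_size: assumes "L \<noteq> {#}" "R \<noteq> {#}"
  shows "Cf L R = cn (sorted_list_of_multiset L) (sorted_list_of_multiset R)"
    "length (sorted_list_of_multiset L) = size L" "length (sorted_list_of_multiset R) = size R"
  by (simp_all add: Cf_def) (metis mset_sorted_list_of_multiset size_mset)+

lemma kap_01:
  fixes L R :: "nat multiset"
  assumes "L \<noteq> {#}" "R \<noteq> {#}" "(0::'k::field) ^ (size L - 1) * 1 ^ (size R - 1) = 0"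
  shows "(e1 (Cf L R) :: 'k npoly) \<in> tideal (bicomm_ids \<union> {pmul (X 1) (pmul (X 2) (X 3))})"
proof -
  let ?ls = "sorted_list_of_multiset L" and ?rs = "sorted_list_of_multiset R"
  have "size L \<ge> 2" using assms(3) by (cases "size L - 1") auto
  then obtain l l' ls where ls: "?ls = l # l' # ls" using Cf_size(2)[OF assms(1,2)]
    by (metis Suc_le_length_iff numeral_2_eq_2)
  have rne: "?rs \<noteq> []" using assms(2) by (metis mset_sorted_list_of_multiset mset_zero_iff)
  obtain u v where uv: "cn (l' # ls) ?rs = M u v" using cn_compound[OF _ rne, of "l' # ls"] by auto
  have "Cf L R = M (V l) (M u v)" using ls uv by (simp add: Cf_def)
  moreover have eq: "psubst (\<lambda>i::nat. if i = 1 then e1 (V l) else if i = 2 then e1 u else (e1 v :: 'k npoly)) (pmul (X 1) (pmul (X 2) (X 3)))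
      = e1 (M (V l) (M u v))" by (simp add: psubst_pmul e1_M)
  moreover have "psubst (\<lambda>i::nat. if i = 1 then e1 (V l) else if i = 2 then e1 u else (e1 v :: 'k npoly)) (pmul (X 1) (pmul (X 2) (X 3)))
     \<in> tideal (bicomm_ids \<union> {pmul (X 1) (pmul (X 2) (X 3))})"
    by (rule tideal.gen) simp
  ultimately show ?thesis by simp
qed

lemma cn_rc_tideal:
  assumes "pmul (pmul (X 1) (X 2)) (X 3) \<in> S" "ls \<noteq> []"
  shows "(e1 (cn ls (r # r' # rs)) :: 'k::field npoly) \<in> tideal S"
  using assms(2)
proof (induction ls "r # r' # rs" rule: cn.induct)
  case (2 l)
  have "psubst (\<lambda>i::nat. if i = 1 then e1 (lb l rs) else if i = 2 then e1 (V r') else (e1 (V r) :: 'k npoly)) (pmul (pmul (X 1) (X 2)) (X 3))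
      = e1 (lb l (r # r' # rs))" by (simp add: psubst_pmul e1_M)
  moreover have "psubst (\<lambda>i::nat. if i = 1 then e1 (lb l rs) else if i = 2 then e1 (V r') else (e1 (V r) :: 'k npoly)) (pmul (pmul (X 1) (X 2)) (X 3)) \<in> tideal S"
    by (rule tideal.gen[OF assms(1)])
  ultimately show ?case by simp
next
  case (3 l l' ls)
  then show ?case by (simp add: e1_M tideal.lmul)
qed auto

lemma kap_10:
  fixes L R :: "nat multiset"
  assumes "L \<noteq> {#}" "R \<noteq> {#}" "(1::'k::field) ^ (size L - 1) * 0 ^ (size R - 1) = 0"
  shows "(e1 (Cf L R) :: 'k npoly) \<in> tideal (bicomm_ids \<union> {pmul (pmul (X 1) (X 2)) (X 3)})"
proof -
  let ?ls = "sorted_list_of_multiset L" and ?rs = "sorted_list_of_multiset R"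
  have "size R \<ge> 2" using assms(3) by (cases "size R - 1") auto
  then obtain r r' rs where rs: "?rs = r # r' # rs" using Cf_size(3)[OF assms(1,2)]
    by (metis Suc_le_length_iff numeral_2_eq_2)
  have lne: "?ls \<noteq> []" using assms(1) by (metis mset_sorted_list_of_multiset mset_zero_iff)
  show ?thesis unfolding Cf_def rs by (rule cn_rc_tideal[OF _ lne]) simp
qed

lemma IdA_01: "IdA (0::'k::field_char_0) 1 = tideal (bicomm_ids \<union> {pmul (X 1) (pmul (X 2) (X 3))})"
proof
  have SI: "bicomm_ids \<union> {pmul (X 1) (pmul (X 2) (X 3))} \<subseteq> IdA (0::'k) 1"
    using bicomm_IdA by (auto simp: IdA_ev ev_pmul prod_eq_iff)
  show "tideal (bicomm_ids \<union> {pmul (X 1) (pmul (X 2) (X 3))}) \<subseteq> IdA (0::'k) 1"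
    by (rule tideal_sub_IdA[OF SI])
  show "IdA (0::'k) 1 \<subseteq> tideal (bicomm_ids \<union> {pmul (X 1) (pmul (X 2) (X 3))})"
  proof (rule IdA_sub_tideal[OF _ SI])
    fix L R :: "nat multiset" assume "L \<noteq> {#}" "R \<noteq> {#}" "(0::'k) ^ (size L - 1) * 1 ^ (size R - 1) = 0"
    then show "(e1 (Cf L R) :: 'k npoly) \<in> tideal (bicomm_ids \<union> {pmul (X 1) (pmul (X 2) (X 3))})" by (rule kap_01)
  qed auto
qed

lemma IdA_10: "IdA (1::'k::field_char_0) 0 = tideal (bicomm_ids \<union> {pmul (pmul (X 1) (X 2)) (X 3)})"
proof
  have SI: "bicomm_ids \<union> {pmul (pmul (X 1) (X 2)) (X 3)} \<subseteq> IdA (1::'k) 0"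
    using bicomm_IdA by (auto simp: IdA_ev ev_pmul prod_eq_iff)
  show "tideal (bicomm_ids \<union> {pmul (pmul (X 1) (X 2)) (X 3)}) \<subseteq> IdA (1::'k) 0"
    by (rule tideal_sub_IdA[OF SI])
  show "IdA (1::'k) 0 \<subseteq> tideal (bicomm_ids \<union> {pmul (pmul (X 1) (X 2)) (X 3)})"
  proof (rule IdA_sub_tideal[OF _ SI])
    fix L R :: "nat multiset" assume "L \<noteq> {#}" "R \<noteq> {#}" "(1::'k) ^ (size L - 1) * 0 ^ (size R - 1) = 0"
    then show "(e1 (Cf L R) :: 'k npoly) \<in> tideal (bicomm_ids \<union> {pmul (pmul (X 1) (X 2)) (X 3)})" by (rule kap_10)
  qed auto
qed

lemma IdA_1m1: "IdA (1::'k::field_char_0) (-1) = tideal bicomm_ids"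
proof
  show "tideal bicomm_ids \<subseteq> IdA (1::'k) (-1)"
    by (rule tideal_sub_IdA[OF bicomm_IdA])
  show "IdA (1::'k) (-1) \<subseteq> tideal bicomm_ids"
    by (rule IdA_sub_tideal[OF _ bicomm_IdA]) auto
qed



definition btr :: "'k::field npoly set \<Rightarrow> ('k npoly \<Rightarrow> 'k npoly) \<Rightarrow> 'k" where
  "btr B f = (\<Sum>b\<in>B. pv.representation B (f b) b)"

notation pscale (infixr "\<cdot>" 75)

lemma lin_zero: assumes fsc: "\<And>c x. f (c \<cdot> x) = c \<cdot> f x" shows "f 0 = 0"
  using fsc[of 0 0] by simp

lemma lin_sum: assumes fadd: "\<And>x y. f (x + y) = f x + f y" and fsc: "\<And>c x. f (c \<cdot> x) = c \<cdot> f x"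
  shows "f (\<Sum>i\<in>I. g i) = (\<Sum>i\<in>I. f (g i))"
  by (induction I rule: infinite_finite_induct) (auto simp: fadd lin_zero[OF fsc])

lemma tr_invariant:
  assumes B: "pv.independent B" "finite B" and B': "pv.independent B'" "finite B'" and sp: "pv.span B = pv.span B'"
    and fadd: "\<And>x y. f (x + y) = f x + f y" and fsc: "\<And>c x. f (c \<cdot> x) = c \<cdot> f x"
    and fB: "\<And>b. b \<in> pv.span B \<Longrightarrow> f b \<in> pv.span B"
  shows "btr B f = btr B' f"
proof -
  have B'sp: "b' \<in> pv.span B" if "b' \<in> B'" for b' using that sp pv.span_base by blast
  have rep_exp: "pv.representation B v b = (\<Sum>b'\<in>B'. pv.representation B' v b' * pv.representation B b' b)"
    if v: "v \<in> pv.span B" for v b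
  proof -
    have "v = (\<Sum>b'\<in>B'. pv.representation B' v b' \<cdot> b')"
      using pv.sum_representation_eq[of B' v B'] B' sp v by auto
    then have "pv.representation B v = pv.representation B (\<Sum>b'\<in>B'. pv.representation B' v b' \<cdot> b')" by simp
    also have "\<dots> = (\<lambda>b. \<Sum>b'\<in>B'. pv.representation B (pv.representation B' v b' \<cdot> b') b)"
      by (rule pv.representation_sum[OF B(1)]) (auto intro: pv.span_scale B'sp)
    also have "\<dots> = (\<lambda>b. \<Sum>b'\<in>B'. pv.representation B' v b' * pv.representation B b' b)"
      by (intro ext sum.cong refl) (simp add: pv.representation_scale[OF B(1)] B'sp)
    finally show ?thesis by simp
  qed
  have "btr B f = (\<Sum>b\<in>B. \<Sum>b'\<in>B'. pv.representation B' (f b) b' * pv.representation B b' b)"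
    unfolding btr_def by (intro sum.cong refl rep_exp fB pv.span_base)
  also have "\<dots> = (\<Sum>b'\<in>B'. \<Sum>b\<in>B. pv.representation B (b') b * pv.representation B' (f b) b')"
    by (subst sum.swap) (simp add: mult.commute)
  also have "\<dots> = (\<Sum>b'\<in>B'. pv.representation B' (\<Sum>b\<in>B. pv.representation B b' b \<cdot> f b) b')"
  proof (intro sum.cong refl)
    fix b' assume "b' \<in> B'"
    have "pv.representation B' (\<Sum>b\<in>B. pv.representation B b' b \<cdot> f b) = (\<lambda>x. \<Sum>b\<in>B. pv.representation B' (pv.representation B b' b \<cdot> f b) x)"
      by (rule pv.representation_sum[OF B'(1)]) (use fB pv.span_base sp in \<open>auto intro!: pv.span_scale\<close>)
    also have "\<dots> = (\<lambda>x. \<Sum>b\<in>B. pv.representation B b' b * pv.representation B' (f b) x)"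
    proof (intro ext sum.cong refl)
      fix x b assume "b \<in> B"
      then have "f b \<in> pv.span B'" using fB pv.span_base sp by metis
      then show "pv.representation B' (pv.representation B b' b \<cdot> f b) x = pv.representation B b' b * pv.representation B' (f b) x"
        by (simp add: pv.representation_scale[OF B'(1)])
    qed
    finally show "(\<Sum>b\<in>B. pv.representation B b' b * pv.representation B' (f b) b') = pv.representation B' (\<Sum>b\<in>B. pv.representation B b' b \<cdot> f b) b'"
      by simp
  qed
  also have "\<dots> = (\<Sum>b'\<in>B'. pv.representation B' (f b') b')"
  proof (intro sum.cong refl)
    fix b' assume b': "b' \<in> B'"
    have "(\<Sum>b\<in>B. pv.representation B b' b \<cdot> f b) = f (\<Sum>b\<in>B. pv.representation B b' b \<cdot> b)"
      by (simp add: lin_sum[OF fadd fsc] fsc)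
    also have "(\<Sum>b\<in>B. pv.representation B b' b \<cdot> b) = b'"
      using pv.sum_representation_eq[OF B(1) B'sp[OF b'] B(2)] by simp
    finally show "pv.representation B' (\<Sum>b\<in>B. pv.representation B b' b \<cdot> f b) b' = pv.representation B' (f b') b'" by simp
  qed
  finally show ?thesis by (simp add: btr_def)
qed


lemma indicator_sum: "finite J \<Longrightarrow> j \<in> J \<Longrightarrow> (\<Sum>i\<in>J. (if i = j then 1 else 0) \<cdot> (u i :: 'k::field npoly)) = u j"
  by (simp add: if_distrib[of "\<lambda>c. c \<cdot> _"] sum.delta cong: if_cong)

lemma quot_lemma:
  fixes u :: "'j \<Rightarrow> 'k::field npoly" and \<tau> :: "'j \<Rightarrow> 'j"
  assumes W0W: "W0 \<subseteq> W" and sW: "pv.subspace W" and sW0: "pv.subspace W0"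
   and finF: "finite F" "W \<subseteq> pv.span F"
   and J: "finite J" "u ` J \<subseteq> W"
   and ind: "\<And>c. (\<Sum>j\<in>J. c j \<cdot> u j) \<in> W0 \<Longrightarrow> \<forall>j\<in>J. c j = 0"
   and spn: "\<And>w. w \<in> W \<Longrightarrow> \<exists>v\<in>pv.span (u ` J). w - v \<in> W0"
   and fadd: "\<And>x y. f (x + y) = f x + f y" and fsc: "\<And>c x. f (c \<cdot> x) = c \<cdot> f x"
   and fW0: "\<And>w. w \<in> W0 \<Longrightarrow> f w \<in> W0"
   and fu: "\<And>j. j \<in> J \<Longrightarrow> \<tau> j \<in> J \<and> f (u j) - u (\<tau> j) \<in> W0"
   and B: "B \<subseteq> W" "pv.independent B" "pv.span B = W"
   and B0: "B0 \<subseteq> W0" "pv.independent B0" "pv.span B0 = W0"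
  shows "pv.dim W = pv.dim W0 + card J \<and> btr B f - btr B0 f = of_nat (card {j\<in>J. \<tau> j = j})"
proof -
  have finB: "finite B" using pv.independent_span_bound[OF finF(1) B(2)] B(1) finF(2) by auto
  have finB0: "finite B0" using pv.independent_span_bound[OF finF(1) B0(2)] B0(1) W0W finF(2) by auto
  have unot: "u j \<notin> W0" if "j \<in> J" for j
  proof
    assume "u j \<in> W0"
    then have "(\<Sum>i\<in>J. (if i = j then 1 else 0) \<cdot> u i) \<in> W0" using indicator_sum[OF J(1) that, of u] by simp
    then show False using ind that by fastforce
  qed
  have uinj: "inj_on u J"
  proof (rule inj_onI, rule ccontr)
    fix j k assume jk: "j \<in> J" "k \<in> J" "u j = u k" "j \<noteq> k"
    let ?c = "\<lambda>i. (if i = j then 1 else 0) - (if i = k then 1 else (0::'k))"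
    have "(\<Sum>i\<in>J. ?c i \<cdot> u i) = (\<Sum>i\<in>J. (if i = j then 1 else 0) \<cdot> u i) - (\<Sum>i\<in>J. (if i = k then 1 else 0) \<cdot> u i)"
      by (simp add: pv.scale_left_diff_distrib sum_subtractf)
    also have "\<dots> = 0" using indicator_sum[OF J(1) jk(1), of u] indicator_sum[OF J(1) jk(2), of u] jk(3) by simp
    finally have "(\<Sum>i\<in>J. ?c i \<cdot> u i) \<in> W0" using pv.subspace_0[OF sW0] by simp
    then have "?c j = 0" using ind[of ?c] jk(1) by blast
    then show False using jk(4) by simp
  qed
  have disj: "B0 \<inter> u ` J = {}" using unot B0(1) by auto
  define B1 where "B1 = B0 \<union> u ` J"
  have finB1: "finite B1" using finB0 J(1) by (simp add: B1_def)
  have B1W: "B1 \<subseteq> W" using B0(1) W0W J(2) by (auto simp: B1_def)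
  have indB1: "pv.independent B1"
  proof -
    have "\<forall>x\<in>B1. g x = 0" if g: "(\<Sum>x\<in>B1. g x \<cdot> x) = 0" for g
    proof -
      have spl: "(\<Sum>x\<in>B1. g x \<cdot> x) = (\<Sum>x\<in>B0. g x \<cdot> x) + (\<Sum>x\<in>u ` J. g x \<cdot> x)"
        unfolding B1_def by (rule sum.union_disjoint) (use finB0 J(1) disj in auto)
      moreover have uj: "(\<Sum>x\<in>u ` J. g x \<cdot> x) = (\<Sum>j\<in>J. g (u j) \<cdot> u j)"
        by (rule sum.reindex_cong[OF uinj refl refl])
      ultimately have "(\<Sum>x\<in>B0. g x \<cdot> x) + (\<Sum>j\<in>J. g (u j) \<cdot> u j) = 0" using g by simp
      then have e: "(\<Sum>j\<in>J. g (u j) \<cdot> u j) = - (\<Sum>x\<in>B0. g x \<cdot> x)" by (simp add: add_eq_0_iff)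
      have "(\<Sum>x\<in>B0. g x \<cdot> x) \<in> pv.span B0"
        by (intro pv.span_sum pv.span_scale pv.span_base)
      then have "(\<Sum>x\<in>B0. g x \<cdot> x) \<in> W0" using B0(3) by simp
      then have "(\<Sum>j\<in>J. g (u j) \<cdot> u j) \<in> W0" unfolding e using pv.subspace_neg[OF sW0] by blast
      then have gu: "\<forall>j\<in>J. g (u j) = 0" by (rule ind)
      then have "(\<Sum>x\<in>u ` J. g x \<cdot> x) = 0" unfolding uj by simp
      then have "(\<Sum>x\<in>B0. g x \<cdot> x) = 0" using g spl by simp
      then have "\<forall>x\<in>B0. g x = 0" using B0(2) pv.dependent_finite[OF finB0] by blast
      then show ?thesis using gu by (auto simp: B1_def)
    qed
    then show ?thesis using pv.dependent_finite[OF finB1] by blast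
  qed
  have spB1: "pv.span B1 = W"
  proof
    show "pv.span B1 \<subseteq> W" using B1W sW by (simp add: pv.span_minimal)
    show "W \<subseteq> pv.span B1"
    proof
      fix w assume "w \<in> W"
      then obtain v where v: "v \<in> pv.span (u ` J)" "w - v \<in> W0" using spn by blast
      have "v \<in> pv.span B1" using v(1) pv.span_mono[of "u ` J" B1] by (auto simp: B1_def)
      moreover have "w - v \<in> pv.span B1" using v(2) B0(3) pv.span_mono[of B0 B1] by (auto simp: B1_def)
      ultimately have "(w - v) + v \<in> pv.span B1" by (rule pv.span_add[rotated])
      then show "w \<in> pv.span B1" by simp
    qed
  qed
  have dimW: "pv.dim W = card B1" using pv.dim_unique[OF B1W _ indB1 refl] spB1 by simp
  have dimW0: "pv.dim W0 = card B0" using pv.dim_unique[OF B0(1) _ B0(2) refl] B0(3) by simp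
  have cardB1: "card B1 = card B0 + card J"
    unfolding B1_def using finB0 J(1) disj by (simp add: card_Un_disjoint card_image[OF uinj])
  have fW: "f w \<in> W" if wW: "w \<in> W" for w
  proof -
    have sub: "pv.subspace {x. f x \<in> W}"
      unfolding pv.subspace_def using pv.subspace_0[OF sW] pv.subspace_add[OF sW] pv.subspace_scale[OF sW]
      by (simp add: fadd fsc lin_zero[OF fsc])
    have "u ` J \<subseteq> {x. f x \<in> W}"
    proof
      fix x assume "x \<in> u ` J"
      then obtain j where j: "j \<in> J" "x = u j" by blast
      have "f (u j) = u (\<tau> j) + (f (u j) - u (\<tau> j))" by simp
      moreover have "u (\<tau> j) \<in> W" using fu[OF j(1)] J(2) by blast
      moreover have "f (u j) - u (\<tau> j) \<in> W" using fu[OF j(1)] W0W by blast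
      ultimately show "x \<in> {x. f x \<in> W}" using j pv.subspace_add[OF sW, of "u (\<tau> j)" "f (u j) - u (\<tau> j)"] by simp
    qed
    then have spU: "pv.span (u ` J) \<subseteq> {x. f x \<in> W}" using sub by (rule pv.span_minimal)
    obtain v where v: "v \<in> pv.span (u ` J)" "w - v \<in> W0" using spn wW by blast
    have "f w = f (w - v) + f v" using fadd[of "w - v" v] by simp
    moreover have "f (w - v) \<in> W" using fW0[OF v(2)] W0W by blast
    moreover have "f v \<in> W" using spU v(1) by blast
    ultimately show ?thesis using pv.subspace_add[OF sW] by simp
  qed
  have trB: "btr B f = btr B1 f"
    by (rule tr_invariant[OF B(2) finB indB1 finB1]) (use B(3) spB1 fadd fsc fW in auto)
  have tr_split: "btr B1 f = (\<Sum>b\<in>B0. pv.representation B1 (f b) b) + (\<Sum>b\<in>u ` J. pv.representation B1 (f b) b)"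
    unfolding btr_def B1_def by (rule sum.union_disjoint) (use finB0 J(1) disj in auto)
  have part1: "(\<Sum>b\<in>B0. pv.representation B1 (f b) b) = btr B0 f"
    unfolding btr_def
  proof (intro sum.cong refl)
    fix b assume "b \<in> B0"
    then have "f b \<in> pv.span B0" using B0 fW0 pv.span_base by blast
    then show "pv.representation B1 (f b) b = pv.representation B0 (f b) b"
      using pv.representation_extend[OF indB1 _ ] by (simp add: B1_def)
  qed
  have part2: "(\<Sum>b\<in>u ` J. pv.representation B1 (f b) b) = (\<Sum>j\<in>J. if \<tau> j = j then 1 else 0)"
  proof -
    have "(\<Sum>b\<in>u ` J. pv.representation B1 (f b) b) = (\<Sum>j\<in>J. pv.representation B1 (f (u j)) (u j))"
      by (rule sum.reindex_cong[OF uinj refl refl])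
    also have "\<dots> = (\<Sum>j\<in>J. if \<tau> j = j then 1 else 0)"
    proof (intro sum.cong refl)
      fix j assume j: "j \<in> J"
      define w where "w = f (u j) - u (\<tau> j)"
      have w: "w \<in> pv.span B0" using fu[OF j] B0(3) by (simp add: w_def)
      have wB1: "w \<in> pv.span B1" using w pv.span_mono[of B0 B1] by (auto simp: B1_def)
      have utB1: "u (\<tau> j) \<in> B1" using fu[OF j] by (auto simp: B1_def)
      have "f (u j) = u (\<tau> j) + w" by (simp add: w_def)
      then have "pv.representation B1 (f (u j)) (u j) = pv.representation B1 (u (\<tau> j)) (u j) + pv.representation B1 w (u j)"
        using pv.representation_add[OF indB1 wB1 pv.span_base[OF utB1]] by simp
      also have "pv.representation B1 (u (\<tau> j)) (u j) = (if \<tau> j = j then 1 else 0)"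
      proof -
        have "pv.representation B1 (u (\<tau> j)) (u j) = (if u j = u (\<tau> j) then 1 else 0)"
          by (simp add: pv.representation_basis[OF indB1 utB1])
        moreover have "(u j = u (\<tau> j)) = (\<tau> j = j)" using inj_onD[OF uinj] j fu[OF j] by metis
        ultimately show ?thesis by simp
      qed
      also have "pv.representation B1 w (u j) = pv.representation B0 w (u j)"
        using pv.representation_extend[OF indB1 w] by (simp add: B1_def)
      also have "pv.representation B0 w (u j) = 0"
        using pv.representation_ne_zero[of B0 w "u j"] disj j by auto
      finally show "pv.representation B1 (f (u j)) (u j) = (if \<tau> j = j then 1 else 0)" by simp
    qed
    finally show ?thesis .
  qed
  have "(\<Sum>j\<in>J. if \<tau> j = j then 1 else 0) = (of_nat (card {j\<in>J. \<tau> j = j}) :: 'k)"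
    using sum.inter_filter[OF J(1), of "\<lambda>_. 1::'k" "\<lambda>j. \<tau> j = j"] by simp
  moreover have "btr B f - btr B0 f = (\<Sum>b\<in>u ` J. pv.representation B1 (f b) b)"
    using trB tr_split part1 by simp
  ultimately have "btr B f - btr B0 f = of_nat (card {j\<in>J. \<tau> j = j})" using part2 by simp
  moreover have "pv.dim W = pv.dim W0 + card J" using dimW dimW0 cardB1 by simp
  ultimately show ?thesis by simp
qed


lemma leaves_ne: "leaves t \<noteq> []"
  by (induction t) auto

lemma finite_mons: "finite S \<Longrightarrow> finite {t. set (leaves t) \<subseteq> S \<and> length (leaves t) \<le> k}"
proof (induction k)
  case 0 then show ?case using leaves_ne by simp
next
  case (Suc k)
  let ?A = "{t. set (leaves t) \<subseteq> S \<and> length (leaves t) \<le> k}"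
  have "{t. set (leaves t) \<subseteq> S \<and> length (leaves t) \<le> Suc k} \<subseteq> V ` S \<union> (\<lambda>(a, b). M a b) ` (?A \<times> ?A)"
  proof
    fix t assume t: "t \<in> {t. set (leaves t) \<subseteq> S \<and> length (leaves t) \<le> Suc k}"
    show "t \<in> V ` S \<union> (\<lambda>(a, b). M a b) ` (?A \<times> ?A)"
    proof (cases t)
      case (V i) then show ?thesis using t by auto
    next
      case (M a b)
      have "leaves a \<noteq> []" "leaves b \<noteq> []" by (rule leaves_ne)+
      then have "length (leaves a) \<ge> 1" "length (leaves b) \<ge> 1" by (auto simp: Suc_le_eq)
      then have "a \<in> ?A" "b \<in> ?A" using t M by auto
      then show ?thesis using M by auto
    qed
  qed
  moreover have "finite (V ` S \<union> (\<lambda>(a, b). M a b) ` (?A \<times> ?A))" using Suc by auto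
  ultimately show ?case by (rule finite_subset)
qed

definition Nn :: "nat \<Rightarrow> nat multiset" where "Nn n = mset_set {1..n}"

lemma Nn_eq: "mset [1..<n+1] = Nn n"
  unfolding Nn_def mset_upt by (simp add: atLeastLessThanSuc_atLeastAtMost)

lemma set_Nn[simp]: "set_mset (Nn n) = {1..n}" and size_Nn[simp]: "size (Nn n) = n"
  by (simp_all add: Nn_def)

definition monset :: "nat \<Rightarrow> mon set" where "monset n = {t. mset (leaves t) = Nn n}"

lemma finite_monset: "finite (monset n)"
proof -
  have "monset n \<subseteq> {t. set (leaves t) \<subseteq> {1..n} \<and> length (leaves t) \<le> n}"
  proof
    fix t assume "t \<in> monset n"
    then have t: "mset (leaves t) = Nn n" by (simp add: monset_def)
    have "set (leaves t) = {1..n}" using arg_cong[OF t, of set_mset] by simp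
    moreover have "length (leaves t) = n" using arg_cong[OF t, of size] by simp
    ultimately show "t \<in> {t. set (leaves t) \<subseteq> {1..n} \<and> length (leaves t) \<le> n}" by simp
  qed
  then show ?thesis using finite_mons[of "{1..n}" n] by (auto intro: finite_subset)
qed

lemma Pn_keys: "p \<in> Pn n \<longleftrightarrow> Poly_Mapping.keys p \<subseteq> monset n"
  unfolding Pn_def monset_def Nn_eq by auto

lemma Pn_subspace: "pv.subspace (Pn n)"
proof -
  have "x + y \<in> Pn n" if "x \<in> Pn n" "y \<in> Pn n" for x y :: "'a npoly"
    using that keys_add[of x y] unfolding Pn_keys by blast
  moreover have "c \<cdot> x \<in> Pn n" if "x \<in> Pn n" for x :: "'a npoly" and c
    using that unfolding Pn_keys by (auto simp: in_keys_iff)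
  moreover have "0 \<in> Pn n" unfolding Pn_keys by simp
  ultimately show ?thesis unfolding pv.subspace_def by blast
qed

lemma e1_Pn: "m \<in> monset n \<Longrightarrow> e1 m \<in> Pn n"
  by (simp add: Pn_keys)

lemma expand_scale: "p = (\<Sum>t\<in>Poly_Mapping.keys p. Poly_Mapping.lookup p t \<cdot> e1 t)"
  using poly_expand[of "Poly_Mapping.keys p" p] by (simp add: single_as_pscale[symmetric])

lemma Pn_span: "Pn n \<subseteq> pv.span (e1 ` monset n)"
proof
  fix p :: "'a npoly" assume p: "p \<in> Pn n"
  have "(\<Sum>t\<in>Poly_Mapping.keys p. Poly_Mapping.lookup p t \<cdot> e1 t) \<in> pv.span (e1 ` monset n)"
    using p by (intro pv.span_sum pv.span_scale pv.span_base) (auto simp: Pn_keys)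
  then show "p \<in> pv.span (e1 ` monset n)" using expand_scale[of p] by simp
qed

fun ren :: "(nat \<Rightarrow> nat) \<Rightarrow> mon \<Rightarrow> mon" where
  "ren \<sigma> (V i) = V (\<sigma> i)"
| "ren \<sigma> (M s t) = M (ren \<sigma> s) (ren \<sigma> t)"

lemma tsubst_ren: "tsubst (\<lambda>i. X (\<sigma> i)) t = e1 (ren \<sigma> t)"
  by (induction t) (auto simp: X_def pmul_single)

lemma leaves_ren: "leaves (ren \<sigma> t) = map \<sigma> (leaves t)"
  by (induction t) auto

lemma pact_add: "pact \<sigma> (p + q) = pact \<sigma> p + pact \<sigma> q" by (simp add: pact_def psubst_add)
lemma pact_scale: "pact \<sigma> (c \<cdot> p) = c \<cdot> pact \<sigma> p" by (simp add: pact_def psubst_scale)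
lemma pact_e1: "pact \<sigma> (e1 t) = e1 (ren \<sigma> t)" by (simp add: pact_def psubst_single tsubst_ren)

lemma image_Nn: assumes "\<sigma> permutes {1..n}" shows "image_mset \<sigma> (Nn n) = Nn n"
proof -
  have inj: "inj_on \<sigma> {1..n}" using assms permutes_inj_on by blast
  show ?thesis unfolding Nn_def image_mset_mset_set[OF inj] permutes_image[OF assms] ..
qed

lemma ren_monset: "\<sigma> permutes {1..n} \<Longrightarrow> t \<in> monset n \<Longrightarrow> ren \<sigma> t \<in> monset n"
  by (simp add: monset_def leaves_ren image_Nn[of \<sigma> n] mset_map)

lemma pact_Pn: assumes "\<sigma> permutes {1..n}" "p \<in> Pn n" shows "pact \<sigma> p \<in> Pn n"
proof -
  have "pact \<sigma> p = (\<Sum>t\<in>Poly_Mapping.keys p. Poly_Mapping.lookup p t \<cdot> e1 (ren \<sigma> t))"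
  proof -
    have "pact \<sigma> p = pact \<sigma> (\<Sum>t\<in>Poly_Mapping.keys p. Poly_Mapping.lookup p t \<cdot> e1 t)"
      using expand_scale[of p] by simp
    also have "\<dots> = (\<Sum>t\<in>Poly_Mapping.keys p. Poly_Mapping.lookup p t \<cdot> pact \<sigma> (e1 t))"
      unfolding pact_def psubst_sum psubst_scale ..
    finally show ?thesis by (simp add: pact_e1)
  qed
  also have "\<dots> \<in> Pn n"
    using assms Pn_subspace
    by (intro pv.subspace_sum pv.subspace_scale e1_Pn ren_monset) (auto simp: Pn_keys)
  finally show ?thesis .
qed

lemma pact_IdA: "p \<in> IdA \<pi> \<rho> \<Longrightarrow> pact \<sigma> p \<in> IdA \<pi> \<rho>"
  by (simp add: pact_def IdA_psubst)


lemma some_basis: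
  assumes "pv.subspace W"
  defines "B \<equiv> SOME B. B \<subseteq> W \<and> \<not> pv.dependent B \<and> pv.span B = W"
  shows "B \<subseteq> W \<and> pv.independent B \<and> pv.span B = W"
proof -
  obtain B' where B': "B' \<subseteq> W" "pv.independent B'" "W \<subseteq> pv.span B'"
    by (meson pv.basis_exists)
  have "pv.span B' \<subseteq> W" by (rule pv.span_minimal[OF B'(1) assms(1)])
  then have "pv.span B' = W" using B'(3) by (rule antisym)
  then have "B' \<subseteq> W \<and> \<not> pv.dependent B' \<and> pv.span B' = W" using B'(1,2) by blast
  then show ?thesis unfolding B_def by (rule someI)
qed

lemma ptrace_eq: "ptrace W f = btr (SOME B. B \<subseteq> W \<and> \<not> pv.dependent B \<and> pv.span B = W) f"
  by (simp add: ptrace_def btr_def Let_def)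

lemma charlemma:
  fixes I :: "'k::field npoly set" and u :: "nat \<Rightarrow> 'k npoly"
  assumes sI: "pv.subspace I"
    and J: "finite J" "u ` J \<subseteq> Pn n"
    and ind: "\<And>c. (\<Sum>j\<in>J. c j \<cdot> u j) \<in> I \<Longrightarrow> \<forall>j\<in>J. c j = 0"
    and spn: "\<And>w. w \<in> Pn n \<Longrightarrow> \<exists>v\<in>pv.span (u ` J). w - v \<in> I"
    and \<sigma>: "\<sigma> permutes {1..n}" and \<sigma>I: "\<And>w. w \<in> I \<Longrightarrow> pact \<sigma> w \<in> I"
    and fu: "\<And>j. j \<in> J \<Longrightarrow> \<sigma> j \<in> J \<and> pact \<sigma> (u j) - u (\<sigma> j) \<in> I"
  shows "codim I n = card J \<and> cochar I n \<sigma> = of_nat (card {j\<in>J. \<sigma> j = j})"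
proof -
  let ?W = "Pn n :: 'k npoly set"
  let ?V = "Pn n \<inter> I"
  have sW: "pv.subspace ?W" by (rule Pn_subspace)
  have sW0: "pv.subspace ?V" using sW sI by (rule pv.subspace_inter)
  define B where "B = (SOME B. B \<subseteq> ?W \<and> \<not> pv.dependent B \<and> pv.span B = ?W)"
  define B0 where "B0 = (SOME B. B \<subseteq> ?V \<and> \<not> pv.dependent B \<and> pv.span B = ?V)"
  have B: "B \<subseteq> ?W" "pv.independent B" "pv.span B = ?W" using some_basis[OF sW] by (simp_all add: B_def)
  have B0: "B0 \<subseteq> ?V" "pv.independent B0" "pv.span B0 = ?V" using some_basis[OF sW0] by (simp_all add: B0_def)
  have spU: "pv.span (u ` J) \<subseteq> ?W" using J(2) sW by (rule pv.span_minimal)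
  have q: "pv.dim ?W = pv.dim ?V + card J \<and> btr B (pact \<sigma>) - btr B0 (pact \<sigma>) = of_nat (card {j\<in>J. \<sigma> j = j})"
  proof (rule quot_lemma[OF _ sW sW0 finite_imageI[OF finite_monset] Pn_span J _ _ pact_add pact_scale _ _ B B0])
    show "?V \<subseteq> ?W" by blast
    show "\<forall>j\<in>J. c j = 0" if "(\<Sum>j\<in>J. c j \<cdot> u j) \<in> ?V" for c using ind that by blast
    show "\<exists>v\<in>pv.span (u ` J). w - v \<in> ?V" if w: "w \<in> ?W" for w
    proof -
      obtain v where v: "v \<in> pv.span (u ` J)" "w - v \<in> I" using spn[OF w] by blast
      have "w - v \<in> ?W" using w spU v(1) pv.subspace_diff[OF sW] by blast
      then show ?thesis using v by blast
    qed
    show "pact \<sigma> w \<in> ?V" if "w \<in> ?V" for w using that pact_Pn[OF \<sigma>] \<sigma>I by blast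
    show "\<sigma> j \<in> J \<and> pact \<sigma> (u j) - u (\<sigma> j) \<in> ?V" if j: "j \<in> J" for j
    proof -
      have "pact \<sigma> (u j) \<in> ?W" using pact_Pn[OF \<sigma>] J(2) j by blast
      moreover have "u (\<sigma> j) \<in> ?W" using fu[OF j] J(2) by blast
      ultimately have "pact \<sigma> (u j) - u (\<sigma> j) \<in> ?W" using pv.subspace_diff[OF sW] by blast
      then show ?thesis using fu[OF j] by blast
    qed
  qed
  have "codim I n = card J" using q by (simp add: codim_def pdim_def)
  moreover have "cochar I n \<sigma> = of_nat (card {j\<in>J. \<sigma> j = j})"
    using q by (simp add: cochar_def ptrace_eq B_def B0_def)
  ultimately show ?thesis by simp
qed


lemma Nn_1: "Nn 1 = {#1#}" by (simp add: Nn_def)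

lemma monset_1: "monset 1 = {V 1}"
proof -
  have "t = V 1" if "mset (leaves t) = {#1#}" for t
  proof (cases t)
    case (V i) then show ?thesis using that by simp
  next
    case (M a b)
    have "length (leaves a) \<ge> 1" "length (leaves b) \<ge> 1" using leaves_ne[of a] leaves_ne[of b] by (auto simp: Suc_le_eq)
    moreover have "length (leaves t) = 1" using arg_cong[OF that, of size] by simp
    ultimately show ?thesis using M by simp
  qed
  moreover have "mset (leaves (V 1)) = {#1#}" by simp
  ultimately show ?thesis unfolding monset_def Nn_1 by blast
qed

lemma spn_mon:
  assumes sI: "pv.subspace I" and H: "\<And>m. m \<in> monset n \<Longrightarrow> \<exists>v\<in>pv.span U. e1 m - v \<in> I"
    and w: "w \<in> Pn n"
  shows "\<exists>v\<in>pv.span U. w - v \<in> I"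
proof -
  define vf where "vf m = (SOME v. v \<in> pv.span U \<and> e1 m - v \<in> I)" for m
  have vf: "vf m \<in> pv.span U \<and> e1 m - vf m \<in> I" if "m \<in> monset n" for m
    unfolding vf_def by (rule someI_ex) (use H[OF that] in blast)
  define v where "v = (\<Sum>t\<in>Poly_Mapping.keys w. Poly_Mapping.lookup w t \<cdot> vf t)"
  have kw: "Poly_Mapping.keys w \<subseteq> monset n" using w by (simp add: Pn_keys)
  have v1: "v \<in> pv.span U" unfolding v_def using vf kw by (intro pv.span_sum pv.span_scale) auto
  have "w - v = (\<Sum>t\<in>Poly_Mapping.keys w. Poly_Mapping.lookup w t \<cdot> (e1 t - vf t))"
    unfolding v_def by (subst (1) expand_scale[of w]) (simp add: sum_subtractf pv.scale_right_diff_distrib)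
  also have "\<dots> \<in> I" using vf kw sI by (intro pv.subspace_sum pv.subspace_scale) auto
  finally show ?thesis using v1 by blast
qed

lemma char_n1:
  fixes \<pi> \<rho> :: "'k::field"
  assumes \<sigma>: "\<sigma> permutes {1..1}"
  shows "codim (IdA \<pi> \<rho>) 1 = 1 \<and> cochar (IdA \<pi> \<rho>) 1 \<sigma> = 1"
proof -
  have s1: "\<sigma> 1 = 1" using permutes_in_image[OF \<sigma>, of 1] by simp
  have "codim (IdA \<pi> \<rho>) 1 = card {1::nat} \<and> cochar (IdA \<pi> \<rho>) 1 \<sigma> = of_nat (card {j\<in>{1::nat}. \<sigma> j = j})"
  proof (rule charlemma[OF IdA_subspace _ _ _ _ \<sigma> pact_IdA, where u="\<lambda>_. X 1"])
    show "finite {1::nat}" by simp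
    have "V 1 \<in> monset 1" using monset_1 by blast
    then show "(\<lambda>_. X 1) ` {1::nat} \<subseteq> Pn 1" unfolding X_def using e1_Pn by blast
    show "\<forall>j\<in>{1}. c j = 0" if "(\<Sum>j\<in>{1}. c j \<cdot> X 1) \<in> IdA \<pi> \<rho>" for c
    proof -
      have "ev \<pi> \<rho> (\<lambda>_. (1, 0)) (c 1 \<cdot> X 1) = 0" using that by (simp add: IdA_ev)
      then show ?thesis by (simp add: ev_scale prod_eq_iff)
    qed
    show "\<exists>v\<in>pv.span ((\<lambda>_. X 1) ` {1}). w - v \<in> IdA \<pi> \<rho>" if w: "w \<in> Pn 1" for w
    proof (rule spn_mon[OF IdA_subspace _ w])
      fix m assume "m \<in> monset 1"
      then have "m = V 1" using monset_1 by blast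
      then show "\<exists>v\<in>pv.span ((\<lambda>_. X 1) ` {1}). e1 m - v \<in> IdA \<pi> \<rho>"
        by (intro bexI[of _ "X 1"]) (auto simp: X_def IdA_zero intro: pv.span_base)
    qed
    show "\<sigma> j \<in> {1} \<and> pact \<sigma> (X 1) - X 1 \<in> IdA \<pi> \<rho>" if "j \<in> {1}" for j
      using that s1 by (simp add: pact_def IdA_zero)
  qed
  moreover have "{j\<in>{1::nat}. \<sigma> j = j} = {1}" using s1 by auto
  ultimately show ?thesis by simp
qed


lemma leaves_lb: "mset (leaves (lb l rs)) = add_mset l (mset rs)"
  by (induction rs) auto

lemma leaves_cn: "ls \<noteq> [] \<Longrightarrow> mset (leaves (cn ls rs)) = mset ls + mset rs"
  by (induction ls rs rule: cn.induct) (auto simp: leaves_lb)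

lemma leaves_Cf: "L \<noteq> {#} \<Longrightarrow> mset (leaves (Cf L R)) = L + R"
  unfolding Cf_def by (subst leaves_cn) (auto simp: mset_zero_iff[symmetric] simp del: mset_zero_iff)

lemma Lm_Rm: "m = M s t \<Longrightarrow> Lm m + Rm m = mset (leaves m)"
proof (induction m arbitrary: s t)
  case (M a b)
  have A: "(case a of V i \<Rightarrow> {#i#} | M x y \<Rightarrow> Lm a) + Rm a = mset (leaves a)"
    using M.IH(1) by (cases a) auto
  have B: "Lm b + (case b of V j \<Rightarrow> {#j#} | M x y \<Rightarrow> Rm b) = mset (leaves b)"
    using M.IH(2) by (cases b) auto
  have "Lm (M a b) + Rm (M a b) = ((case a of V i \<Rightarrow> {#i#} | M x y \<Rightarrow> Lm a) + Rm a) + (Lm b + (case b of V j \<Rightarrow> {#j#} | M x y \<Rightarrow> Rm b))"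
    by (simp add: ac_simps)
  also have "\<dots> = mset (leaves (M a b))" by (simp only: A B leaves.simps mset_append)
  finally show ?case .
qed simp

lemma ren_lb: "ren \<sigma> (lb l rs) = lb (\<sigma> l) (map \<sigma> rs)"
  by (induction rs) auto

lemma ren_cn: "ren \<sigma> (cn ls rs) = (if ls = [] then V (\<sigma> 0) else cn (map \<sigma> ls) (map \<sigma> rs))"
  by (induction ls rs rule: cn.induct) (auto simp: ren_lb)

lemma beq_ren_Cf: assumes "L \<noteq> {#}" "R \<noteq> {#}"
  shows "beq (ren \<sigma> (Cf L R)) (Cf (image_mset \<sigma> L) (image_mset \<sigma> R))"
proof -
  let ?ls = "sorted_list_of_multiset L"
  let ?rs = "sorted_list_of_multiset R"
  have ne: "?ls \<noteq> []" "?rs \<noteq> []" using assms by (metis mset_sorted_list_of_multiset mset_zero_iff)+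
  have "ren \<sigma> (Cf L R) = cn (map \<sigma> ?ls) (map \<sigma> ?rs)" using ne by (simp add: Cf_def ren_cn)
  moreover have "beq (cn (map \<sigma> ?ls) (map \<sigma> ?rs)) (Cf (mset (map \<sigma> ?ls)) (mset (map \<sigma> ?rs)))"
    using ne by (intro beq_cn_Cf) auto
  ultimately show ?thesis by (simp add: mset_map)
qed

lemma mem_Nn: "j \<in># Nn n \<longleftrightarrow> j \<in> {1..n}" by simp

lemma image_Nn_diff: assumes "\<sigma> permutes {1..n}" "j \<in> {1..n}"
  shows "image_mset \<sigma> (Nn n - {#j#}) = Nn n - {#\<sigma> j#}"
proof -
  have "{#j#} \<subseteq># Nn n" using assms(2) by simp
  then show ?thesis using image_mset_Diff[of "{#j#}" "Nn n" \<sigma>] image_Nn[OF assms(1)] by simp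
qed

lemma beq_IdA: "beq m m' \<Longrightarrow> (e1 m - e1 m' :: 'k::field npoly) \<in> IdA \<pi> \<rho>"
  using beq_tideal[of bicomm_ids m m'] tideal_sub_IdA[OF bicomm_IdA] by blast

lemma monset_compound: assumes "m \<in> monset n" "n \<ge> 2" shows "\<exists>s t. m = M s t"
proof (cases m)
  case (V i)
  then have "size (mset (leaves m)) = 1" by simp
  moreover have "size (mset (leaves m)) = n" using assms(1) by (simp add: monset_def)
  ultimately show ?thesis using assms(2) by simp
qed auto

definition a_k :: "nat \<Rightarrow> nat \<Rightarrow> 'k::field \<times> 'k" where
  "a_k k l = (1, (if l = k then 1 else 0) - 1)"

lemma char_10:
  fixes \<sigma> :: "nat \<Rightarrow> nat"
  assumes \<sigma>: "\<sigma> permutes {1..n}" and n: "n \<ge> 2"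
  shows "codim (IdA (1::'k::field_char_0) 0) n = n \<and> cochar (IdA (1::'k) 0) n \<sigma> = of_nat (card {j\<in>{1..n}. \<sigma> j = j})"
proof -
  define U where "U j = Cf (Nn n - {#j#}) {#j#}" for j
  have Lne: "Nn n - {#j#} \<noteq> {#}" if "j \<in> {1..n}" for j
  proof -
    have "size (Nn n - {#j#}) = n - 1" using that by (simp add: size_Diff_submset)
    then show ?thesis using n by auto
  qed
  have Umon: "U j \<in> monset n" if "j \<in> {1..n}" for j
    using that Lne[OF that] by (simp add: U_def monset_def leaves_Cf)
  have "codim (IdA (1::'k) 0) n = card {1..n} \<and> cochar (IdA (1::'k) 0) n \<sigma> = of_nat (card {j\<in>{1..n}. \<sigma> j = j})"
  proof (rule charlemma[OF IdA_subspace _ _ _ _ \<sigma> pact_IdA, where u="\<lambda>j. e1 (U j)"])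
    show "finite {1..n}" by simp
    show "(\<lambda>j. e1 (U j)) ` {1..n} \<subseteq> Pn n" using Umon e1_Pn by blast
    show "\<forall>j\<in>{1..n}. c j = 0" if c: "(\<Sum>j\<in>{1..n}. c j \<cdot> e1 (U j)) \<in> IdA (1::'k) 0" for c
    proof
      fix k assume k: "k \<in> {1..n}"
      have tv: "teval (Amul 1 0) (a_k k) (U j) = (0, if j = k then 1 else (0::'k))" if "j \<in> {1..n}" for j
        using Lne[OF that] by (simp add: U_def teval_Cf phi_def psi_def a_k_def)
      have "0 = snd (ev 1 0 (a_k k) (\<Sum>j\<in>{1..n}. c j \<cdot> e1 (U j)))" using c by (simp add: IdA_ev)
      also have "\<dots> = (\<Sum>j\<in>{1..n}. c j * (if j = k then 1 else 0))"
        unfolding ev_sum ev_scale ev_single snd_sum by (intro sum.cong refl) (simp add: tv)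
      also have "\<dots> = c k" using k by (simp add: if_distrib[of "\<lambda>x. _ * x"] sum.delta cong: if_cong)
      finally show "c k = 0" by simp
    qed
    show "\<exists>v\<in>pv.span ((\<lambda>j. e1 (U j)) ` {1..n}). w - v \<in> IdA (1::'k) 0" if w: "w \<in> Pn n" for w
    proof (rule spn_mon[OF IdA_subspace _ w])
      fix m assume m: "m \<in> monset n"
      obtain s t where st: "m = M s t" using monset_compound[OF m n] by blast
      have LR: "Lm m + Rm m = Nn n" using Lm_Rm[OF st] m by (simp add: monset_def)
      have d: "e1 m - e1 (Cf (Lm m) (Rm m)) \<in> IdA (1::'k) 0" by (rule beq_IdA[OF beq_Cf(1)[OF st]])
      have Lne': "Lm m \<noteq> {#}" "Rm m \<noteq> {#}" using beq_Cf(2,3)[OF st] by auto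
      show "\<exists>v\<in>pv.span ((\<lambda>j. e1 (U j)) ` {1..n}). e1 m - v \<in> IdA (1::'k) 0"
      proof (cases "size (Rm m) = 1")
        case True
        then obtain j where j: "Rm m = {#j#}" by (metis size_1_singleton_mset)
        have "j \<in># Lm m + Rm m" using j by simp
        then have jN: "j \<in> {1..n}" using LR mem_Nn by metis
        have "Lm m = Nn n - {#j#}" using LR j by (metis add_diff_cancel_right')
        then have "Cf (Lm m) (Rm m) = U j" using j by (simp add: U_def)
        then show ?thesis using d jN by (intro bexI[of _ "e1 (U j)"]) (auto intro: pv.span_base)
      next
        case False
        then have "size (Rm m) \<ge> 2" using Lne' by (cases "size (Rm m)") auto
        then have "(1::'k) ^ (size (Lm m) - 1) * 0 ^ (size (Rm m) - 1) = 0" by simp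
        then have "e1 (Cf (Lm m) (Rm m)) \<in> IdA (1::'k) 0" using kap_10[OF Lne'] IdA_10 by blast
        then have "e1 m - 0 \<in> IdA (1::'k) 0" using IdA_add[OF d] by fastforce
        then show ?thesis by (intro bexI[of _ 0]) (auto intro: pv.span_zero)
      qed
    qed
    show "\<sigma> j \<in> {1..n} \<and> pact \<sigma> (e1 (U j)) - e1 (U (\<sigma> j)) \<in> IdA (1::'k) 0" if j: "j \<in> {1..n}" for j
    proof
      show sj: "\<sigma> j \<in> {1..n}" using permutes_in_image[OF \<sigma>] j by blast
      have "beq (ren \<sigma> (U j)) (Cf (image_mset \<sigma> (Nn n - {#j#})) (image_mset \<sigma> {#j#}))"
        unfolding U_def by (rule beq_ren_Cf[OF Lne[OF j]]) simp
      then have "beq (ren \<sigma> (U j)) (U (\<sigma> j))" using image_Nn_diff[OF \<sigma> j] by (simp add: U_def)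
      then show "pact \<sigma> (e1 (U j)) - e1 (U (\<sigma> j)) \<in> IdA (1::'k) 0" by (simp add: pact_e1 beq_IdA)
    qed
  qed
  then show ?thesis by simp
qed

lemma char_01:
  fixes \<sigma> :: "nat \<Rightarrow> nat"
  assumes \<sigma>: "\<sigma> permutes {1..n}" and n: "n \<ge> 2"
  shows "codim (IdA (0::'k::field_char_0) 1) n = n \<and> cochar (IdA (0::'k) 1) n \<sigma> = of_nat (card {j\<in>{1..n}. \<sigma> j = j})"
proof -
  define U where "U j = Cf {#j#} (Nn n - {#j#})" for j
  have Lne: "Nn n - {#j#} \<noteq> {#}" if "j \<in> {1..n}" for j
  proof -
    have "size (Nn n - {#j#}) = n - 1" using that by (simp add: size_Diff_submset)
    then show ?thesis using n by auto
  qed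
  have Umon: "U j \<in> monset n" if "j \<in> {1..n}" for j
    using that Lne[OF that] by (simp add: U_def monset_def leaves_Cf)
  have "codim (IdA (0::'k) 1) n = card {1..n} \<and> cochar (IdA (0::'k) 1) n \<sigma> = of_nat (card {j\<in>{1..n}. \<sigma> j = j})"
  proof (rule charlemma[OF IdA_subspace _ _ _ _ \<sigma> pact_IdA, where u="\<lambda>j. e1 (U j)"])
    show "finite {1..n}" by simp
    show "(\<lambda>j. e1 (U j)) ` {1..n} \<subseteq> Pn n" using Umon e1_Pn by blast
    show "\<forall>j\<in>{1..n}. c j = 0" if c: "(\<Sum>j\<in>{1..n}. c j \<cdot> e1 (U j)) \<in> IdA (0::'k) 1" for c
    proof
      fix k assume k: "k \<in> {1..n}"
      have tv: "teval (Amul 0 1) (a_k k) (U j) = (0, if j = k then 1 else (0::'k))" if "j \<in> {1..n}" for j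
          using Lne[OF that] by (simp add: U_def teval_Cf phi_def psi_def a_k_def)
      have "0 = snd (ev 0 1 (a_k k) (\<Sum>j\<in>{1..n}. c j \<cdot> e1 (U j)))" using c by (simp add: IdA_ev)
      also have "\<dots> = (\<Sum>j\<in>{1..n}. c j * (if j = k then 1 else 0))"
        unfolding ev_sum ev_scale ev_single snd_sum by (intro sum.cong refl) (simp add: tv)
      also have "\<dots> = c k" using k by (simp add: if_distrib[of "\<lambda>x. _ * x"] sum.delta cong: if_cong)
      finally show "c k = 0" by simp
    qed
    show "\<exists>v\<in>pv.span ((\<lambda>j. e1 (U j)) ` {1..n}). w - v \<in> IdA (0::'k) 1" if w: "w \<in> Pn n" for w
    proof (rule spn_mon[OF IdA_subspace _ w])
      fix m assume m: "m \<in> monset n"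
      obtain s t where st: "m = M s t" using monset_compound[OF m n] by blast
      have LR: "Lm m + Rm m = Nn n" using Lm_Rm[OF st] m by (simp add: monset_def)
      have d: "e1 m - e1 (Cf (Lm m) (Rm m)) \<in> IdA (0::'k) 1" by (rule beq_IdA[OF beq_Cf(1)[OF st]])
      have Lne': "Lm m \<noteq> {#}" "Rm m \<noteq> {#}" using beq_Cf(2,3)[OF st] by auto
      show "\<exists>v\<in>pv.span ((\<lambda>j. e1 (U j)) ` {1..n}). e1 m - v \<in> IdA (0::'k) 1"
      proof (cases "size (Lm m) = 1")
        case True
        then obtain j where j: "Lm m = {#j#}" by (metis size_1_singleton_mset)
        have "j \<in># Lm m + Rm m" using j by simp
        then have jN: "j \<in> {1..n}" using LR mem_Nn by metis
        have "Rm m = Nn n - {#j#}" using LR j by (metis add_diff_cancel_left')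
        then have "Cf (Lm m) (Rm m) = U j" using j by (simp add: U_def)
        then show ?thesis using d jN by (intro bexI[of _ "e1 (U j)"]) (auto intro: pv.span_base)
      next
        case False
        then have "size (Lm m) \<ge> 2" using Lne' by (cases "size (Lm m)") auto
        then have "(0::'k) ^ (size (Lm m) - 1) * 1 ^ (size (Rm m) - 1) = 0" by simp
        then have "e1 (Cf (Lm m) (Rm m)) \<in> IdA (0::'k) 1" using kap_01[OF Lne'] IdA_01 by blast
        then have "e1 m - 0 \<in> IdA (0::'k) 1" using IdA_add[OF d] by fastforce
        then show ?thesis by (intro bexI[of _ 0]) (auto intro: pv.span_zero)
      qed
    qed
    show "\<sigma> j \<in> {1..n} \<and> pact \<sigma> (e1 (U j)) - e1 (U (\<sigma> j)) \<in> IdA (0::'k) 1" if j: "j \<in> {1..n}" for j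
    proof
      show sj: "\<sigma> j \<in> {1..n}" using permutes_in_image[OF \<sigma>] j by blast
      have "beq (ren \<sigma> (U j)) (Cf (image_mset \<sigma> {#j#}) (image_mset \<sigma> (Nn n - {#j#})))"
        unfolding U_def by (rule beq_ren_Cf[OF _ Lne[OF j]]) simp
      then have "beq (ren \<sigma> (U j)) (U (\<sigma> j))" using image_Nn_diff[OF \<sigma> j] by (simp add: U_def)
      then show "pact \<sigma> (e1 (U j)) - e1 (U (\<sigma> j)) \<in> IdA (0::'k) 1" by (simp add: pact_e1 beq_IdA)
    qed
  qed
  then show ?thesis by simp
qed


lemma perms_1: "{w. w permutes {0..<Suc 0}} = {id}"
  by auto

lemma sum_perms_2: "(\<Sum>w | w permutes {0..<2::nat}. f w) = f id + (f (Transposition.transpose 0 1) :: 'a::comm_monoid_add)"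
proof -
  have e: "{0..<2::nat} = insert 0 {1}" by auto
  have "(\<Sum>w | w permutes {0..<2::nat}. f w) = (\<Sum>b\<in>insert 0 {1::nat}. \<Sum>q | q permutes {1}. f (Transposition.transpose 0 b \<circ> q))"
    unfolding e by (rule sum_over_permutations_insert) auto
  also have "\<dots> = f id + f (Transposition.transpose 0 1)" by simp
  finally show ?thesis .
qed

definition f0 :: "nat \<Rightarrow> nat \<Rightarrow> nat" where "f0 n = (\<lambda>k. if k \<in> {1..n} then 0 else undefined)"

lemma all_less_1: "(\<forall>i<Suc 0. P i) = P 0" by auto
lemma all_less_2: "(\<forall>i<2::nat. P i) = (P 0 \<and> P 1)" by (auto simp: numeral_2_eq_2 less_Suc_eq)

lemma f0_props: assumes \<sigma>: "\<sigma> permutes {1..n}" and m: "m \<ge> 1"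
  shows "f0 n \<in> {1..n} \<rightarrow>\<^sub>E {0..<m}" "\<forall>k\<in>{1..n}. f0 n (\<sigma> k) = f0 n k"
    "card {k \<in> {1..n}. f0 n k = 0} = n" "card {k \<in> {1..n}. f0 n k = 1} = 0"
proof -
  show "f0 n \<in> {1..n} \<rightarrow>\<^sub>E {0..<m}" using m by (auto simp: f0_def PiE_iff extensional_def)
  have "\<sigma> k \<in> {1..n}" if "k \<in> {1..n}" for k using permutes_in_image[OF \<sigma>] that by blast
  then show "\<forall>k\<in>{1..n}. f0 n (\<sigma> k) = f0 n k" by (simp add: f0_def)
  have "{k \<in> {1..n}. f0 n k = 0} = {1..n}" by (auto simp: f0_def)
  then show "card {k \<in> {1..n}. f0 n k = 0} = n" by simp
  have "{k \<in> {1..n}. f0 n k = 1} = {}" by (auto simp: f0_def)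
  then show "card {k \<in> {1..n}. f0 n k = 1} = 0" by simp
qed

lemma yc_n: assumes \<sigma>: "\<sigma> permutes {1..n}" shows "young_char [n] n \<sigma> = 1"
proof -
  let ?S = "{f \<in> {1..n} \<rightarrow>\<^sub>E {0..<length [n]}. (\<forall>k\<in>{1..n}. f (\<sigma> k) = f k) \<and>
          (\<forall>i<length [n]. card {k \<in> {1..n}. f k = i} = [n] ! i)}"
  have "?S = {f0 n}"
  proof (intro equalityI subsetI)
    fix f assume f: "f \<in> ?S"
    then have fP: "f \<in> {1..n} \<rightarrow>\<^sub>E {0..<1}" by simp
    have "f k = f0 n k" for k
    proof (cases "k \<in> {1..n}")
      case True then show ?thesis using fP by (auto simp: f0_def PiE_iff)
    next
      case False then show ?thesis using fP by (auto simp: f0_def PiE_iff extensional_def)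
    qed
    then show "f \<in> {f0 n}" by auto
  next
    fix f assume "f \<in> {f0 n}"
    then show "f \<in> ?S" using f0_props[OF \<sigma>, of 1] by (simp add: all_less_1)
  qed
  then show ?thesis unfolding young_char_def by simp
qed

lemma yc_n0: assumes \<sigma>: "\<sigma> permutes {1..n}" shows "young_char [n, 0] n \<sigma> = 1"
proof -
  let ?S = "{f \<in> {1..n} \<rightarrow>\<^sub>E {0..<length [n, 0]}. (\<forall>k\<in>{1..n}. f (\<sigma> k) = f k) \<and>
          (\<forall>i<length [n, 0]. card {k \<in> {1..n}. f k = i} = [n, 0] ! i)}"
  have "?S = {f0 n}"
  proof (intro equalityI subsetI)
    fix f assume f: "f \<in> ?S"
    then have c1: "card {k \<in> {1..n}. f k = 1} = 0" by auto
    have no1: "{k \<in> {1..n}. f k = 1} = {}" using c1 by (simp add: card_eq_0_iff)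
    have fP: "f \<in> {1..n} \<rightarrow>\<^sub>E {0..<2}" using f by (simp add: numeral_2_eq_2)
    have "f k = f0 n k" for k
    proof (cases "k \<in> {1..n}")
      case True
      then have "f k < 2" "f k \<noteq> 1" using fP no1 by (auto simp: PiE_iff)
      then have "f k = 0" by simp
      then show ?thesis using True by (simp add: f0_def)
    next
      case False then show ?thesis using fP by (auto simp: f0_def PiE_iff extensional_def)
    qed
    then show "f \<in> {f0 n}" by auto
  next
    fix f assume "f \<in> {f0 n}"
    then have f: "f = f0 n" by simp
    have m2: "(1::nat) \<le> 2" by simp
    have c: "card {k \<in> {1..n}. f0 n k = i} = [n, 0] ! i" if "i < length [n, 0]" for i
    proof -
      have "i = 0 \<or> i = 1" using that by auto
      then show ?thesis using f0_props(3,4)[OF \<sigma> m2] by auto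
    qed
    have "f0 n \<in> {1..n} \<rightarrow>\<^sub>E {0..<length [n, 0]}" using f0_props(1)[OF \<sigma> m2] by (simp add: numeral_2_eq_2)
    then show "f \<in> ?S" using f0_props(2)[OF \<sigma> m2] c f by blast
  qed
  then show ?thesis unfolding young_char_def by simp
qed


definition fj :: "nat \<Rightarrow> nat \<Rightarrow> nat \<Rightarrow> nat" where
  "fj n j = (\<lambda>k. if k \<in> {1..n} then (if k = j then 1 else 0) else undefined)"

lemma yc_fix: assumes \<sigma>: "\<sigma> permutes {1..n}"
  shows "young_char [n - 1, 1] n \<sigma> = card {j\<in>{1..n}. \<sigma> j = j}"
proof -
  let ?S = "{f \<in> {1..n} \<rightarrow>\<^sub>E {0..<length [n - 1, 1]}. (\<forall>k\<in>{1..n}. f (\<sigma> k) = f k) \<and>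
          (\<forall>i<length [n - 1, 1]. card {k \<in> {1..n}. f k = i} = [n - 1, 1] ! i)}"
  have \<sigma>in: "\<sigma> k \<in> {1..n}" if "k \<in> {1..n}" for k using permutes_in_image[OF \<sigma>] that by blast
  have \<sigma>inj: "k = k'" if "\<sigma> k = \<sigma> k'" for k k' using permutes_inj[OF \<sigma>] that by (metis injD)
  have "?S = fj n ` {j\<in>{1..n}. \<sigma> j = j}"
  proof (intro equalityI subsetI)
    fix f assume f: "f \<in> ?S"
    have fP: "f \<in> {1..n} \<rightarrow>\<^sub>E {0..<2}" using f by (simp add: numeral_2_eq_2)
    have "card {k \<in> {1..n}. f k = 1} = 1" using f by auto
    then obtain j where j: "{k \<in> {1..n}. f k = 1} = {j}" by (rule card_1_singletonE)
    have jN: "j \<in> {1..n}" and fj1: "f j = 1" using j by auto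
    have ff: "f k = fj n j k" for k
    proof (cases "k \<in> {1..n}")
      case True
      then have "f k < 2" using fP by (auto simp: PiE_iff)
      moreover have "f k = 1 \<longleftrightarrow> k = j" using j True by auto
      ultimately show ?thesis using True by (auto simp: fj_def)
    next
      case False then show ?thesis using fP by (auto simp: fj_def PiE_iff extensional_def)
    qed
    have "f (\<sigma> j) = 1" using f jN fj1 by auto
    then have "\<sigma> j \<in> {k \<in> {1..n}. f k = 1}" using \<sigma>in[OF jN] by simp
    then have "\<sigma> j = j" unfolding j by blast
    then show "f \<in> fj n ` {j\<in>{1..n}. \<sigma> j = j}" using jN ff by (auto intro!: image_eqI[of _ _ j])
  next
    fix f assume "f \<in> fj n ` {j\<in>{1..n}. \<sigma> j = j}"
    then obtain j where j: "j \<in> {1..n}" "\<sigma> j = j" and f: "f = fj n j" by blast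
    have 1: "f \<in> {1..n} \<rightarrow>\<^sub>E {0..<length [n - 1, 1]}" unfolding f by (auto simp: fj_def PiE_iff extensional_def)
    have 2: "\<forall>k\<in>{1..n}. f (\<sigma> k) = f k"
    proof
      fix k assume k: "k \<in> {1..n}"
      have "\<sigma> k = j \<longleftrightarrow> k = j" using j \<sigma>inj by metis
      then show "f (\<sigma> k) = f k" using k \<sigma>in[OF k] by (simp add: f fj_def)
    qed
    have 3: "card {k \<in> {1..n}. f k = i} = [n - 1, 1] ! i" if "i < length [n - 1, 1]" for i
    proof -
      have "{k \<in> {1..n}. f k = 0} = {1..n} - {j}" by (auto simp: f fj_def)
      moreover have "{k \<in> {1..n}. f k = 1} = {j}" using j by (auto simp: f fj_def)
      moreover have "i = 0 \<or> i = 1" using that by auto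
      moreover have "card ({1..n} - {j}) = n - 1" using j(1) by (simp add: card_Diff_singleton)
      ultimately show ?thesis by (elim disjE) simp_all
    qed
    show "f \<in> ?S" using 1 2 3 by blast
  qed
  note eqS = this
  have inj: "inj_on (fj n) {j\<in>{1..n}. \<sigma> j = j}"
  proof (rule inj_onI)
    fix j j' assume jj: "j \<in> {j\<in>{1..n}. \<sigma> j = j}" "j' \<in> {j\<in>{1..n}. \<sigma> j = j}" "fj n j = fj n j'"
    then have e: "fj n j j = fj n j' j" by simp
    have "fj n j j = 1" using jj(1) by (simp add: fj_def)
    moreover have "fj n j' j = (if j = j' then 1 else 0)" using jj(1) by (simp add: fj_def)
    ultimately show "j = j'" using e by (metis zero_neq_one)
  qed
  have "young_char [n - 1, 1] n \<sigma> = card ?S" unfolding young_char_def ..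
  also have "\<dots> = card (fj n ` {j\<in>{1..n}. \<sigma> j = j})" unfolding eqS ..
  also have "\<dots> = card {j\<in>{1..n}. \<sigma> j = j}" by (rule card_image[OF inj])
  finally show ?thesis .
qed


lemma upt_2: "[0..<2] = [0::nat, 1]" by (simp add: numeral_2_eq_2)

lemma irr_n: assumes \<sigma>: "\<sigma> permutes {1..n}" shows "irr_char [n] n \<sigma> = (1::'k::field)"
proof -
  have "irr_char [n] n \<sigma> = (\<Sum>w\<in>{id}. of_int (sign w) *
      (if \<forall>i<Suc 0. int i \<le> int ([n] ! i) + int (w i)
       then of_nat (young_char (map (\<lambda>i. nat (int ([n] ! i) + int (w i) - int i)) [0..<Suc 0]) n \<sigma>) else (0::'k)))"
    unfolding irr_char_def by (simp only: list.size perms_1 One_nat_def[symmetric] add_0 length_Cons length_0_conv) (simp add: perms_1)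
  also have "\<dots> = of_nat (young_char [n] n \<sigma>)" by simp
  also have "\<dots> = 1" using yc_n[OF \<sigma>] by simp
  finally show ?thesis .
qed

lemma irr_n11: assumes \<sigma>: "\<sigma> permutes {1..n}" and n: "n \<ge> 2"
  shows "irr_char [n - 1, 1] n \<sigma> = of_nat (young_char [n - 1, 1] n \<sigma>) - (1::'k::field)"
proof -
  let ?lam = "[n - 1, 1]"
  define F where "F w = of_int (sign w) *
      (if \<forall>i<length ?lam. int i \<le> int (?lam ! i) + int (w i)
       then of_nat (young_char (map (\<lambda>i. nat (int (?lam ! i) + int (w i) - int i)) [0..<length ?lam]) n \<sigma>) else (0::'k))" for w :: "nat \<Rightarrow> nat"
  have len: "length ?lam = 2" by simp
  have "irr_char ?lam n \<sigma> = (\<Sum>w | w permutes {0..<2}. F w)"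
    unfolding irr_char_def F_def len ..
  also have "\<dots> = F id + F (Transposition.transpose 0 1)" by (rule sum_perms_2)
  also have "F id = of_nat (young_char [n - 1, 1] n \<sigma>)"
  proof -
    have "\<forall>i<2. int i \<le> int (?lam ! i) + int (id i)" by (simp add: all_less_2)
    moreover have "map (\<lambda>i. nat (int (?lam ! i) + int (id i) - int i)) [0..<2] = [n - 1, 1]"
      by (simp add: upt_2)
    ultimately show ?thesis unfolding F_def len by simp
  qed
  also have "F (Transposition.transpose 0 1) = - 1"
  proof -
    have "\<forall>i<2. int i \<le> int (?lam ! i) + int (Transposition.transpose 0 1 i)" by (simp add: all_less_2)
    moreover have "map (\<lambda>i. nat (int (?lam ! i) + int (Transposition.transpose 0 1 i) - int i)) [0..<2] = [n, 0]"
      using n by (simp add: upt_2)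
    moreover have "sign (Transposition.transpose (0::nat) 1) = -1" by (simp add: sign_swap_id)
    ultimately show ?thesis unfolding F_def len using yc_n0[OF \<sigma>] by simp
  qed
  finally show ?thesis by simp
qed


theorem theorem5p2:
  shows
   "IdA (0::'k::field_char_0) 1 = tideal (bicomm_ids \<union> {pmul (X 1) (pmul (X 2) (X 3))})
  \<and> IdA (1::'k) 0 = tideal (bicomm_ids \<union> {pmul (pmul (X 1) (X 2)) (X 3)})
  \<and> (\<forall>\<sigma>. \<sigma> permutes {1..1} \<longrightarrow>
        cochar (IdA (0::'k) 1) 1 \<sigma> = irr_char [1] 1 \<sigma>
      \<and> cochar (IdA (1::'k) 0) 1 \<sigma> = irr_char [1] 1 \<sigma>)
  \<and> (\<forall>n\<ge>2. \<forall>\<sigma>. \<sigma> permutes {1..n} \<longrightarrow>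
        cochar (IdA (0::'k) 1) n \<sigma> = cochar (IdA (1::'k) 0) n \<sigma>
      \<and> cochar (IdA (1::'k) 0) n \<sigma> = irr_char [n] n \<sigma> + irr_char [n - 1, 1] n \<sigma>)
  \<and> (\<forall>n\<ge>1. codim (IdA (0::'k) 1) n = n \<and> codim (IdA (1::'k) 0) n = n)
  \<and> IdA (1::'k) (-1) = tideal bicomm_ids"
proof (intro conjI allI impI)
  show "IdA (0::'k) 1 = tideal (bicomm_ids \<union> {pmul (X 1) (pmul (X 2) (X 3))})" by (rule IdA_01)
  show "IdA (1::'k) 0 = tideal (bicomm_ids \<union> {pmul (pmul (X 1) (X 2)) (X 3)})" by (rule IdA_10)
  show "IdA (1::'k) (-1) = tideal bicomm_ids" by (rule IdA_1m1)
  fix \<sigma> :: "nat \<Rightarrow> nat"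
  assume \<sigma>: "\<sigma> permutes {1..1}"
  have i1: "irr_char [1] 1 \<sigma> = (1::'k)" using irr_n[OF \<sigma>] .
  show "cochar (IdA (0::'k) 1) 1 \<sigma> = irr_char [1] 1 \<sigma>" using char_n1[OF \<sigma>, of "0::'k" 1] i1 by simp
  show "cochar (IdA (1::'k) 0) 1 \<sigma> = irr_char [1] 1 \<sigma>" using char_n1[OF \<sigma>, of "1::'k" 0] i1 by simp
next
  fix n :: nat and \<sigma> assume n: "n \<ge> 2" and \<sigma>: "\<sigma> permutes {1..n}"
  have a: "cochar (IdA (0::'k) 1) n \<sigma> = of_nat (card {j\<in>{1..n}. \<sigma> j = j})" using char_01[OF \<sigma> n, where 'k='k] by simp
  have b: "cochar (IdA (1::'k) 0) n \<sigma> = of_nat (card {j\<in>{1..n}. \<sigma> j = j})" using char_10[OF \<sigma> n, where 'k='k] by simp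
  have c: "irr_char [n] n \<sigma> + irr_char [n - 1, 1] n \<sigma> = (of_nat (card {j\<in>{1..n}. \<sigma> j = j}) :: 'k)"
    using irr_n[OF \<sigma>, where 'k='k] irr_n11[OF \<sigma> n, where 'k='k] yc_fix[OF \<sigma>] by simp
  show "cochar (IdA (0::'k) 1) n \<sigma> = cochar (IdA (1::'k) 0) n \<sigma>" using a b by simp
  show "cochar (IdA (1::'k) 0) n \<sigma> = irr_char [n] n \<sigma> + irr_char [n - 1, 1] n \<sigma>" using b c by simp
next
  fix n :: nat assume n: "n \<ge> 1"
  have idp: "id permutes {1..n}" by (rule permutes_id)
  show "codim (IdA (0::'k) 1) n = n"
  proof (cases "n = 1")
    case True then show ?thesis using char_n1[of id, of "0::'k" 1] permutes_id by simp
  next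
    case False then show ?thesis using char_01[OF idp, where 'k='k] n by simp
  qed
  show "codim (IdA (1::'k) 0) n = n"
  proof (cases "n = 1")
    case True then show ?thesis using char_n1[of id, of "1::'k" 0] permutes_id by simp
  next
    case False then show ?thesis using char_10[OF idp, where 'k='k] n by simp
  qed
qed


end
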